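(* Let $W=V\epsilon\sim\hat N(0,[\underline\sigma^2,\overline\sigma^2])$ and $\bar W=\bar V\bar\epsilon$ with $\bar W\overset d=W$ (so $\bar V\sim\mathcal M[\underline\sigma,\overline\sigma]$, $\bar\epsilon\sim N(0,1)$), and suppose $W$ and $\bar W$ are semi-sequentially independent, i.e. $V\dashrightarrow\bar V\dashrightarrow\epsilon\dashrightarrow\bar\epsilon$. Then $W+\bar W\overset d=\sqrt2\,W$.
   Context: Sublinear expectation space $(\Omega,\mathcal H,\hat{\mathbb E})$, $\hat{\mathbb E}[X]=\sup_{Q\in\mathcal P}E_Q[X]$. $C_{b,Lip}$: bounded Lipschitz; $C_{l.Lip}$: $|\varphi(x)-\varphi(y)|\le C(1+|x|^k+|y|^k)|x-y|$. $X\overset d=Y$ means $\hat{\mathbb E}[\varphi(X)]=\hat{\mathbb E}[\varphi(Y)]$ for all $\varphi\in C_{b,Lip}$. $X\dashrightarrow Y$ means $\hat{\mathbb E}[\varphi(X,Y)]=\hat{\mathbb E}[\hat{\mathbb E}[\varphi(x,Y)]_{x=X}]$ for all $\varphi\in C_{b,Lip}$; chains $X_1\dashrightarrow\cdots\dashrightarrow X_n$ mean $(X_1,\dots,X_i)\dashrightarrow X_{i+1}$ for each $i$. $V\sim\mathcal M[\underline\sigma,\overline\sigma]$: $\hat{\mathbb E}[\varphi(V)]=\max_{v\in[\underline\sigma,\overline\sigma]}\varphi(v)$ for $\varphi\in C_{l.Lip}$. $\epsilon\sim N(0,1)$: $\hat{\mathbb E}[\varphi(\epsilon)]=E[\varphi(Z)]$,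 $Z$ classical standard normal. Semi-$G$-normal $W\sim\hat N(0,[\underline\sigma^2,\overline\sigma^2])$: $W=V\epsilon$ with $V\sim\mathcal M[\underline\sigma,\overline\sigma]$, $\epsilon\sim N(0,1)$, $V\dashrightarrow\epsilon$. *)

theory Defs
  imports "HOL-Probability.Probability"
begin

text \<open>Sublinear expectation space given through its representation
  \<open>E[X] = sup_{Q in P} E_Q[X]\<close>: \<open>P\<close> is a nonempty family of probability measures
  on a common measurable space \<open>M\<close> (same space and same sigma-algebra).\<close>

definition sublin_space :: "'w measure \<Rightarrow> 'w measure set \<Rightarrow> bool" where
  "sublin_space M P \<longleftrightarrow> P \<noteq> {} \<and>
     (\<forall>Q\<in>P. prob_space Q \<and> sets Q = sets M)"

definition sup_exp :: "'w measure set \<Rightarrow> ('w \<Rightarrow> real) \<Rightarrow> real" where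
  "sup_exp P X = (SUP Q\<in>P. integral\<^sup>L Q X)"

definition C_bLip :: "('a::euclidean_space \<Rightarrow> real) \<Rightarrow> bool" where
  "C_bLip \<phi> \<longleftrightarrow> bounded (range \<phi>) \<and> (\<exists>L. \<forall>x y. \<bar>\<phi> x - \<phi> y\<bar> \<le> L * dist x y)"

definition C_lLip :: "('a::euclidean_space \<Rightarrow> real) \<Rightarrow> bool" where
  "C_lLip \<phi> \<longleftrightarrow> (\<exists>C (k::nat). \<forall>x y.
      \<bar>\<phi> x - \<phi> y\<bar> \<le> C * (1 + norm x ^ k + norm y ^ k) * norm (x - y))"

definition same_distr :: "'w measure set \<Rightarrow> ('w \<Rightarrow> 'a::euclidean_space) \<Rightarrow> ('w \<Rightarrow> 'a) \<Rightarrow> bool" where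
  "same_distr P X Y \<longleftrightarrow>
     (\<forall>\<phi>::'a \<Rightarrow> real. C_bLip \<phi> \<longrightarrow> sup_exp P (\<lambda>w. \<phi> (X w)) = sup_exp P (\<lambda>w. \<phi> (Y w)))"

definition seq_indep :: "'w measure set \<Rightarrow> ('w \<Rightarrow> 'a::euclidean_space) \<Rightarrow> ('w \<Rightarrow> 'b::euclidean_space) \<Rightarrow> bool" where
  "seq_indep P X Y \<longleftrightarrow>
     (\<forall>\<phi>::('a \<times> 'b) \<Rightarrow> real. C_bLip \<phi> \<longrightarrow>
        sup_exp P (\<lambda>w. \<phi> (X w, Y w)) =
        sup_exp P (\<lambda>w. sup_exp P (\<lambda>w'. \<phi> (X w, Y w'))))"

text \<open>\<open>V \<sim> M[a,b]\<close> (maximal distribution); \<open>\<phi>(V)\<close> is required to belong to the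
  space of random variables, i.e. to be integrable under every \<open>Q \<in> P\<close>.\<close>
definition maximal_distr :: "'w measure set \<Rightarrow> ('w \<Rightarrow> real) \<Rightarrow> real \<Rightarrow> real \<Rightarrow> bool" where
  "maximal_distr P V a b \<longleftrightarrow>
     (\<forall>\<phi>::real \<Rightarrow> real. C_lLip \<phi> \<longrightarrow>
        (\<forall>Q\<in>P. integrable Q (\<lambda>w. \<phi> (V w))) \<and>
        sup_exp P (\<lambda>w. \<phi> (V w)) = (SUP v\<in>{a..b}. \<phi> v))"

definition std_normal_distr :: "'w measure set \<Rightarrow> ('w \<Rightarrow> real) \<Rightarrow> bool" where
  "std_normal_distr P e \<longleftrightarrow>
     (\<forall>\<phi>::real \<Rightarrow> real. C_lLip \<phi> \<longrightarrow>
        (\<forall>Q\<in>P. integrable Q (\<lambda>w. \<phi> (e w))) \<and>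
        sup_exp P (\<lambda>w. \<phi> (e w)) = (LINT z|lborel. std_normal_density z * \<phi> z))"

end

theory Submission
  imports Defs
begin

lemma lip_meas:
  fixes g :: "'a::euclidean_space \<Rightarrow> real"
  assumes "\<And>x y. \<bar>g x - g y\<bar> \<le> L * dist x y"
  shows "g \<in> borel_measurable borel"
proof -
  have "(\<bar>L\<bar>)-lipschitz_on UNIV g"
    unfolding lipschitz_on_def using assms
    by (auto simp: dist_real_def intro: order_trans[OF _ mult_right_mono[of L "\<bar>L\<bar>"]])
  then show ?thesis
    by (intro borel_measurable_continuous_onI lipschitz_on_continuous_on)
qed

lemma Sup_unbdd_eq:
  fixes S T :: "real set"
  assumes "\<not> bdd_above S" "\<not> bdd_above T"
  shows "Sup S = Sup T"
proof -
  have "(\<lambda>z. \<forall>x\<in>S. x \<le> z) = (\<lambda>z. \<forall>x\<in>T. x \<le> z)"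
    using assms unfolding bdd_above_def by (intro ext) (meson order.trans linear)
  then show ?thesis unfolding Sup_real_def by simp
qed

lemma subQ:
  assumes "sublin_space M P" "Q \<in> P"
  shows "prob_space Q" "sets Q = sets M"
  using assms unfolding sublin_space_def by auto

lemma measQ:
  assumes "sublin_space M P" "Q \<in> P" "f \<in> borel_measurable M"
  shows "f \<in> borel_measurable Q"
proof -
  have "measurable Q borel = measurable M borel"
    by (rule measurable_cong_sets) (simp_all add: subQ(2)[OF assms(1,2)])
  then show ?thesis using assms(3) by blast
qed

lemma prob_bound:
  fixes g :: "'a \<Rightarrow> real"
  assumes "prob_space Q" "g \<in> borel_measurable Q" "\<And>z. \<bar>g z\<bar> \<le> B"
  shows "integrable Q g" "\<bar>integral\<^sup>L Q g\<bar> \<le> B"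
proof -
  interpret prob_space Q by fact
  show int: "integrable Q g"
    using assms by (intro integrable_const_bound[where B=B]) auto
  have "\<bar>integral\<^sup>L Q g\<bar> \<le> integral\<^sup>L Q (\<lambda>x. \<bar>g x\<bar>)"
    by (rule integral_abs_bound)
  also have "\<dots> \<le> integral\<^sup>L Q (\<lambda>x. B)"
    using assms int by (intro integral_mono) auto
  also have "\<dots> = B" by (simp add: prob_space)
  finally show "\<bar>integral\<^sup>L Q g\<bar> \<le> B" .
qed

lemma prob_diff:
  fixes f g h :: "'a \<Rightarrow> real"
  assumes "prob_space Q" "integrable Q f" "integrable Q g" "integrable Q h"
    "AE z in Q. \<bar>f z - g z\<bar> \<le> h z"
  shows "\<bar>integral\<^sup>L Q f - integral\<^sup>L Q g\<bar> \<le> integral\<^sup>L Q h"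
proof -
  have "\<bar>integral\<^sup>L Q f - integral\<^sup>L Q g\<bar> = \<bar>integral\<^sup>L Q (\<lambda>z. f z - g z)\<bar>"
    using assms by simp
  also have "\<dots> \<le> integral\<^sup>L Q (\<lambda>z. \<bar>f z - g z\<bar>)"
    by (rule integral_abs_bound)
  also have "\<dots> \<le> integral\<^sup>L Q h"
    using assms by (intro integral_mono_AE) auto
  finally show ?thesis .
qed

lemma prob_diff_const:
  fixes f g :: "'a \<Rightarrow> real"
  assumes "prob_space Q" "integrable Q f" "integrable Q g"
    "\<And>z. \<bar>f z - g z\<bar> \<le> d"
  shows "\<bar>integral\<^sup>L Q f - integral\<^sup>L Q g\<bar> \<le> d"
proof -
  interpret prob_space Q by fact
  have "\<bar>integral\<^sup>L Q f - integral\<^sup>L Q g\<bar> \<le> integral\<^sup>L Q (\<lambda>z. d)"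
    using assms by (intro prob_diff) auto
  then show ?thesis by (simp add: prob_space)
qed

lemma sup_le:
  "P \<noteq> {} \<Longrightarrow> (\<And>Q. Q \<in> P \<Longrightarrow> integral\<^sup>L Q f \<le> B) \<Longrightarrow> sup_exp P f \<le> B"
  unfolding sup_exp_def by (rule cSUP_least)

lemma sup_ge:
  "Q \<in> P \<Longrightarrow> bdd_above ((\<lambda>Q. integral\<^sup>L Q f) ` P) \<Longrightarrow> integral\<^sup>L Q f \<le> sup_exp P f"
  unfolding sup_exp_def by (rule cSUP_upper)

lemma sup_diff:
  assumes "P \<noteq> {}" "bdd_above ((\<lambda>Q. integral\<^sup>L Q f) ` P)"
    "bdd_above ((\<lambda>Q. integral\<^sup>L Q g) ` P)"
    "\<And>Q. Q \<in> P \<Longrightarrow> \<bar>integral\<^sup>L Q f - integral\<^sup>L Q g\<bar> \<le> d"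
  shows "\<bar>sup_exp P f - sup_exp P g\<bar> \<le> d"
proof -
  have "sup_exp P f \<le> sup_exp P g + d"
  proof (rule sup_le[OF assms(1)])
    fix Q assume "Q \<in> P"
    then show "integral\<^sup>L Q f \<le> sup_exp P g + d"
      using sup_ge[OF _ assms(3)] assms(4) by fastforce
  qed
  moreover have "sup_exp P g \<le> sup_exp P f + d"
  proof (rule sup_le[OF assms(1)])
    fix Q assume "Q \<in> P"
    then show "integral\<^sup>L Q g \<le> sup_exp P f + d"
      using sup_ge[OF _ assms(2)] assms(4) by fastforce
  qed
  ultimately show ?thesis by linarith
qed

lemma bdd_of_bound:
  fixes f :: "'w \<Rightarrow> real"
  assumes "sublin_space M P" "f \<in> borel_measurable M" "\<And>w. \<bar>f w\<bar> \<le> B"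
  shows "bdd_above ((\<lambda>Q. integral\<^sup>L Q f) ` P)"
proof -
  have "integral\<^sup>L Q f \<le> B" if "Q \<in> P" for Q
  proof -
    have "\<bar>integral\<^sup>L Q f\<bar> \<le> B"
      by (rule prob_bound(2)[OF subQ(1)[OF assms(1) that] measQ[OF assms(1) that assms(2)]]) (rule assms(3))
    then show ?thesis by simp
  qed
  then show ?thesis by (auto simp: bdd_above_def)
qed

lemma sup_bound:
  assumes "sublin_space M P" "f \<in> borel_measurable M" "\<And>w. \<bar>f w\<bar> \<le> B"
  shows "\<bar>sup_exp P f\<bar> \<le> B"
proof -
  have ne: "P \<noteq> {}" using assms(1) by (simp add: sublin_space_def)
  have b: "\<bar>integral\<^sup>L Q f\<bar> \<le> B" if "Q \<in> P" for Q
    by (rule prob_bound(2)[OF subQ(1)[OF assms(1) that] measQ[OF assms(1) that assms(2)]]) (rule assms(3))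
  have "sup_exp P f \<le> B" using b by (intro sup_le[OF ne]) force
  moreover obtain Q where Q: "Q \<in> P" using ne by auto
  have "integral\<^sup>L Q f \<le> sup_exp P f" by (rule sup_ge[OF Q bdd_of_bound[OF assms]])
  ultimately show ?thesis using b[OF Q] by linarith
qed

lemma bdd_shift:
  fixes f :: "'w \<Rightarrow> real"
  assumes "sublin_space M P" "\<And>Q. Q \<in> P \<Longrightarrow> integrable Q f"
    "sup_exp P (\<lambda>w. f w + 1) = sup_exp P f + 1"
  shows "bdd_above ((\<lambda>Q. integral\<^sup>L Q f) ` P)"
proof (rule ccontr)
  assume nb: "\<not> ?thesis"
  have eq: "\<And>Q. Q \<in> P \<Longrightarrow> integral\<^sup>L Q (\<lambda>w. f w + 1) = integral\<^sup>L Q f + 1"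
  proof -
    fix Q assume Q: "Q \<in> P"
    interpret prob_space Q using subQ(1)[OF assms(1) Q] .
    show "integral\<^sup>L Q (\<lambda>w. f w + 1) = integral\<^sup>L Q f + 1"
      using assms(2)[OF Q] by (simp add: prob_space)
  qed
  have nb2: "\<not> bdd_above ((\<lambda>Q. integral\<^sup>L Q (\<lambda>w. f w + 1)) ` P)"
  proof
    assume "bdd_above ((\<lambda>Q. integral\<^sup>L Q (\<lambda>w. f w + 1)) ` P)"
    then obtain K where "\<And>Q. Q \<in> P \<Longrightarrow> integral\<^sup>L Q (\<lambda>w. f w + 1) \<le> K"
      by (auto simp: bdd_above_def)
    then have "\<And>Q. Q \<in> P \<Longrightarrow> integral\<^sup>L Q f \<le> K - 1" using eq by fastforce
    then show False using nb by (auto simp: bdd_above_def)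
  qed
  have "sup_exp P (\<lambda>w. f w + 1) = sup_exp P f"
    unfolding sup_exp_def by (rule Sup_unbdd_eq[OF nb2 nb])
  then show False using assms(3) by simp
qed


definition NN :: "real measure" where "NN = density lborel std_normal_density"

lemma NN_prob: "prob_space NN"
  unfolding NN_def by (rule prob_space_normal_density) simp

lemma sets_NN[simp, measurable_cong]: "sets NN = sets borel"
  unfolding NN_def by simp

lemma space_NN[simp]: "space NN = UNIV"
  unfolding NN_def by simp

lemma NN_meas: "g \<in> borel_measurable borel \<Longrightarrow> g \<in> borel_measurable NN"
  by simp

lemma NN_integral:
  assumes "g \<in> borel_measurable borel"
  shows "integral\<^sup>L NN g = (LINT z|lborel. std_normal_density z * g z)"
  unfolding NN_def using assms by (subst integral_density) auto

lemma NN_sq: "integrable NN (\<lambda>z. z\<^sup>2)"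
  unfolding NN_def
  by (subst integrable_density) (auto simp: integrable_std_normal_moment)

lemma C_bLipI:
  fixes f :: "'a::euclidean_space \<Rightarrow> real"
  assumes "\<And>x. \<bar>f x\<bar> \<le> B" "\<And>x y. \<bar>f x - f y\<bar> \<le> L * dist x y"
  shows "C_bLip f"
  unfolding C_bLip_def bounded_iff using assms by auto

lemma C_bLipE:
  fixes f :: "'a::euclidean_space \<Rightarrow> real"
  assumes "C_bLip f"
  obtains B L where "\<And>x. \<bar>f x\<bar> \<le> B" "\<And>x y. \<bar>f x - f y\<bar> \<le> L * dist x y" "0 \<le> L"
proof -
  obtain B where B: "\<And>x. \<bar>f x\<bar> \<le> B"
    using assms unfolding C_bLip_def bounded_iff by auto
  obtain L where L: "\<And>x y. \<bar>f x - f y\<bar> \<le> L * dist x y"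
    using assms unfolding C_bLip_def by auto
  have "\<And>x y. \<bar>f x - f y\<bar> \<le> \<bar>L\<bar> * dist x y"
    using L by (meson abs_ge_self mult_right_mono order_trans zero_le_dist)
  then show ?thesis using that[OF B] by force
qed

lemma bLip_lLip:
  fixes f :: "real \<Rightarrow> real"
  assumes "C_bLip f"
  shows "C_lLip f"
proof -
  obtain B L where L: "\<And>x y. \<bar>f x - f y\<bar> \<le> L * dist x y" "0 \<le> L"
    using C_bLipE[OF assms] by metis
  have "\<bar>f x - f y\<bar> \<le> L * (1 + norm x ^ 0 + norm y ^ 0) * norm (x - y)" for x y
  proof -
    have "\<bar>f x - f y\<bar> \<le> L * \<bar>x - y\<bar>" using L(1)[of x y] by (simp add: dist_real_def)
    also have "\<dots> \<le> L * 3 * \<bar>x - y\<bar>" using L(2) by (simp add: mult_right_mono)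
    finally show ?thesis by simp
  qed
  then show ?thesis unfolding C_lLip_def by blast
qed

lemma lLip_plus1: "C_lLip f \<Longrightarrow> C_lLip (\<lambda>x. f x + 1)"
  unfolding C_lLip_def by simp

lemma max_apply:
  "maximal_distr P V a b \<Longrightarrow> C_bLip \<psi> \<Longrightarrow> sup_exp P (\<lambda>w. \<psi> (V w)) = (SUP v\<in>{a..b}. \<psi> v)"
  unfolding maximal_distr_def using bLip_lLip by blast

lemma bLip_meas:
  fixes f :: "'a::euclidean_space \<Rightarrow> real"
  assumes "C_bLip f" shows "f \<in> borel_measurable borel"
  using C_bLipE[OF assms] lip_meas by metis

lemma norm_apply:
  "std_normal_distr P e \<Longrightarrow> C_bLip \<psi> \<Longrightarrow> sup_exp P (\<lambda>w. \<psi> (e w)) = integral\<^sup>L NN \<psi>"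
  unfolding std_normal_distr_def using bLip_lLip NN_integral[OF bLip_meas] by metis

lemma max_AE:
  assumes sp: "sublin_space M P" and mx: "maximal_distr P V a b" and ab: "a \<le> b" and Q: "Q \<in> P"
  shows "AE w in Q. a \<le> V w \<and> V w \<le> b"
proof -
  define \<psi> where "\<psi> v = max 0 (a - v) + max 0 (v - b)" for v :: real
  have l: "C_lLip \<psi>"
  proof -
    have "\<bar>\<psi> x - \<psi> y\<bar> \<le> 1 * (1 + norm x ^ 0 + norm y ^ 0) * norm (x - y)" for x y
      by (simp add: \<psi>_def max_def abs_if)
    then show ?thesis unfolding C_lLip_def by blast
  qed
  have z: "\<psi> v = 0" if "v \<in> {a..b}" for v using that by (simp add: \<psi>_def)
  have int: "\<And>Q. Q \<in> P \<Longrightarrow> integrable Q (\<lambda>w. \<psi> (V w))" and s0: "sup_exp P (\<lambda>w. \<psi> (V w)) = (SUP v\<in>{a..b}. \<psi> v)"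
    using mx l unfolding maximal_distr_def by blast+
  have s1: "sup_exp P (\<lambda>w. \<psi> (V w) + 1) = (SUP v\<in>{a..b}. \<psi> v + 1)"
    using mx lLip_plus1[OF l] unfolding maximal_distr_def by blast
  have ne: "{a..b} \<noteq> {}" using ab by simp
  have "(SUP v\<in>{a..b}. \<psi> v) = (SUP v\<in>{a..b}. (0::real))"
    using z by (intro SUP_cong) auto
  then have "(SUP v\<in>{a..b}. \<psi> v) = 0" using ne by simp
  moreover have "(SUP v\<in>{a..b}. \<psi> v + 1) = (SUP v\<in>{a..b}. (1::real))"
    using z by (intro SUP_cong) auto
  then have "(SUP v\<in>{a..b}. \<psi> v + 1) = 1" using ne by simp
  ultimately have S0: "sup_exp P (\<lambda>w. \<psi> (V w)) = 0" and S1: "sup_exp P (\<lambda>w. \<psi> (V w) + 1) = sup_exp P (\<lambda>w. \<psi> (V w)) + 1"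
    using s0 s1 by simp_all
  have bdd: "bdd_above ((\<lambda>Q. integral\<^sup>L Q (\<lambda>w. \<psi> (V w))) ` P)"
    by (rule bdd_shift[OF sp int S1])
  have le: "integral\<^sup>L Q (\<lambda>w. \<psi> (V w)) \<le> 0"
    using sup_ge[OF Q bdd] S0 by simp
  have nn: "\<And>v. 0 \<le> \<psi> v" by (simp add: \<psi>_def)
  have "integral\<^sup>L Q (\<lambda>w. \<psi> (V w)) = 0"
  proof -
    have "0 \<le> integral\<^sup>L Q (\<lambda>w. \<psi> (V w))" by (rule Bochner_Integration.integral_nonneg) (simp add: nn)
    then show ?thesis using le by linarith
  qed
  then have "AE w in Q. \<psi> (V w) = 0"
    using integral_nonneg_eq_0_iff_AE[OF int[OF Q]] nn by simp
  then show ?thesis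
    by (rule eventually_mono) (auto simp: \<psi>_def max_def split: if_splits)
qed

lemma norm_sq:
  assumes sp: "sublin_space M P" and nd: "std_normal_distr P e"
  shows "\<exists>K. \<forall>Q\<in>P. integrable Q (\<lambda>w. (e w)\<^sup>2) \<and> integral\<^sup>L Q (\<lambda>w. (e w)\<^sup>2) \<le> K"
proof -
  define \<psi> where "\<psi> z = z\<^sup>2" for z :: real
  have l: "C_lLip \<psi>"
  proof -
    have "\<bar>\<psi> x - \<psi> y\<bar> \<le> 1 * (1 + norm x ^ 1 + norm y ^ 1) * norm (x - y)" for x y
    proof -
      have "\<bar>\<psi> x - \<psi> y\<bar> = \<bar>x + y\<bar> * \<bar>x - y\<bar>"
        by (simp add: \<psi>_def power2_eq_square abs_mult[symmetric] algebra_simps)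
      also have "\<dots> \<le> (1 + \<bar>x\<bar> + \<bar>y\<bar>) * \<bar>x - y\<bar>"
        by (intro mult_right_mono) auto
      finally show ?thesis by simp
    qed
    then show ?thesis unfolding C_lLip_def by blast
  qed
  have int: "\<And>Q. Q \<in> P \<Longrightarrow> integrable Q (\<lambda>w. \<psi> (e w))" and s0: "sup_exp P (\<lambda>w. \<psi> (e w)) = (LINT z|lborel. std_normal_density z * \<psi> z)"
    using nd l unfolding std_normal_distr_def by blast+
  have s1: "sup_exp P (\<lambda>w. \<psi> (e w) + 1) = (LINT z|lborel. std_normal_density z * (\<psi> z + 1))"
    using nd lLip_plus1[OF l] unfolding std_normal_distr_def by blast
  have "(LINT z|lborel. std_normal_density z * (\<psi> z + 1)) =
      (LINT z|lborel. std_normal_density z * \<psi> z + std_normal_density z)"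
    by (simp add: algebra_simps)
  also have "\<dots> = (LINT z|lborel. std_normal_density z * \<psi> z) + 1"
  proof -
    have "(LINT z|lborel. std_normal_density z * \<psi> z + std_normal_density z) =
       (LINT z|lborel. std_normal_density z * \<psi> z) + (LINT z|lborel. std_normal_density z)"
    proof -
      have i1: "integrable lborel (\<lambda>z. std_normal_density z * \<psi> z)"
        using integrable_std_normal_moment[of 2] by (simp add: \<psi>_def)
      have i2: "integrable lborel (\<lambda>z. std_normal_density z)" by simp
      show ?thesis using Bochner_Integration.integral_add[OF i1 i2] by simp
    qed
    then show ?thesis by simp
  qed
  finally have S1: "sup_exp P (\<lambda>w. \<psi> (e w) + 1) = sup_exp P (\<lambda>w. \<psi> (e w)) + 1"
    using s0 s1 by simp
  have bdd: "bdd_above ((\<lambda>Q. integral\<^sup>L Q (\<lambda>w. \<psi> (e w))) ` P)"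
    by (rule bdd_shift[OF sp int S1])
  show ?thesis
    using int bdd unfolding \<psi>_def bdd_above_def by blast
qed

definition tr :: "real \<Rightarrow> real \<Rightarrow> real" where "tr n z = max (-n) (min n z)"
definition cl :: "real \<Rightarrow> real \<Rightarrow> real \<Rightarrow> real" where "cl a b x = max a (min b x)"

lemma tr_abs: "0 \<le> n \<Longrightarrow> \<bar>tr n z\<bar> \<le> n"
  by (auto simp: tr_def)

lemma tr_lip: "\<bar>tr n z - tr n z'\<bar> \<le> \<bar>z - z'\<bar>"
  by (auto simp: tr_def max_def min_def abs_if)

lemma tr_err:
  assumes "0 < n" shows "\<bar>z - tr n z\<bar> \<le> z\<^sup>2 / n"
proof (cases "\<bar>z\<bar> \<le> n")
  case True
  then have "tr n z = z" by (auto simp: tr_def)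
  then show ?thesis using assms by simp
next
  case False
  then have "z > n \<or> z < -n" by linarith
  then have "\<bar>z - tr n z\<bar> = \<bar>z\<bar> - n" using assms by (auto simp: tr_def max_def min_def)
  also have "\<dots> \<le> \<bar>z\<bar>" using assms by simp
  also have "\<dots> \<le> z\<^sup>2 / n"
  proof -
    have "\<bar>z\<bar> * n \<le> \<bar>z\<bar> * \<bar>z\<bar>" using False assms by (intro mult_left_mono) auto
    then show ?thesis using assms by (simp add: field_simps power2_eq_square)
  qed
  finally show ?thesis .
qed

lemma tr_meas[measurable]: "tr n \<in> borel_measurable borel"
  by (rule lip_meas[where L=1]) (simp add: dist_real_def tr_lip)

lemma cl_lip: "\<bar>cl a b x - cl a b y\<bar> \<le> \<bar>x - y\<bar>"
  by (auto simp: cl_def max_def min_def abs_if)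

lemma cl_abs: "0 \<le> a \<Longrightarrow> a \<le> b \<Longrightarrow> \<bar>cl a b x\<bar> \<le> b"
  by (auto simp: cl_def)

lemma cl_id: "a \<le> x \<Longrightarrow> x \<le> b \<Longrightarrow> cl a b x = x"
  by (auto simp: cl_def)

lemma cl_mem: "a \<le> b \<Longrightarrow> a \<le> cl a b x \<and> cl a b x \<le> b"
  by (auto simp: cl_def)

lemma cl_meas[measurable]: "cl a b \<in> borel_measurable borel"
  by (rule lip_meas[where L=1]) (simp add: dist_real_def cl_lip)

lemma prod_lip:
  fixes x t x' t' :: real
  assumes "\<bar>x\<bar> \<le> b" "\<bar>t'\<bar> \<le> n"
  shows "\<bar>x*t - x'*t'\<bar> \<le> b*\<bar>t - t'\<bar> + n*\<bar>x - x'\<bar>"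
proof -
  have "x*t - x'*t' = x*(t-t') + t'*(x-x')" by algebra
  then have "\<bar>x*t - x'*t'\<bar> \<le> \<bar>x\<bar>*\<bar>t-t'\<bar> + \<bar>t'\<bar>*\<bar>x-x'\<bar>"
    by (metis abs_mult abs_triangle_ineq)
  also have "\<dots> \<le> b*\<bar>t - t'\<bar> + n*\<bar>x - x'\<bar>"
    using assms by (intro add_mono mult_right_mono) auto
  finally show ?thesis .
qed

lemma SUP_close:
  fixes f g :: "'a \<Rightarrow> real"
  assumes ne: "A \<noteq> {}" and bf: "\<And>y. y \<in> A \<Longrightarrow> \<bar>f y\<bar> \<le> B" and bg: "\<And>y. y \<in> A \<Longrightarrow> \<bar>g y\<bar> \<le> B"
    and d: "\<And>y. y \<in> A \<Longrightarrow> \<bar>f y - g y\<bar> \<le> d"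
  shows "\<bar>(SUP y\<in>A. f y) - (SUP y\<in>A. g y)\<bar> \<le> d"
proof -
  have bdf: "bdd_above (f ` A)" using bf by (auto simp: bdd_above_def abs_le_iff)
  have bdg: "bdd_above (g ` A)" using bg by (auto simp: bdd_above_def abs_le_iff)
  have "(SUP y\<in>A. f y) \<le> (SUP y\<in>A. g y) + d"
  proof (rule cSUP_least[OF ne])
    fix y assume y: "y \<in> A"
    have "g y \<le> (SUP y\<in>A. g y)" by (rule cSUP_upper[OF y bdg])
    then show "f y \<le> (SUP y\<in>A. g y) + d" using d[OF y] by linarith
  qed
  moreover have "(SUP y\<in>A. g y) \<le> (SUP y\<in>A. f y) + d"
  proof (rule cSUP_least[OF ne])
    fix y assume y: "y \<in> A"
    have "f y \<le> (SUP y\<in>A. f y)" by (rule cSUP_upper[OF y bdf])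
    then show "g y \<le> (SUP y\<in>A. f y) + d" using d[OF y] by linarith
  qed
  ultimately show ?thesis by linarith
qed

lemma SUP_bound:
  fixes f :: "'a \<Rightarrow> real"
  assumes ne: "A \<noteq> {}" and bf: "\<And>y. y \<in> A \<Longrightarrow> \<bar>f y\<bar> \<le> B"
  shows "\<bar>(SUP y\<in>A. f y)\<bar> \<le> B"
proof -
  have bdf: "bdd_above (f ` A)" using bf by (auto simp: bdd_above_def abs_le_iff)
  obtain y where y: "y \<in> A" using ne by auto
  have "f y \<le> (SUP y\<in>A. f y)" by (rule cSUP_upper[OF y bdf])
  moreover have "(SUP y\<in>A. f y) \<le> B" using bf by (intro cSUP_least[OF ne]) (auto simp: abs_le_iff)
  ultimately show ?thesis using bf[OF y] by (auto simp: abs_le_iff)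
qed


definition H :: "(real \<Rightarrow> real) \<Rightarrow> real \<Rightarrow> real \<Rightarrow> real \<Rightarrow> real" where
  "H \<phi> n m s = integral\<^sup>L NN (\<lambda>u. \<phi> (m + s * tr n u))"
definition Dn :: "(real \<Rightarrow> real) \<Rightarrow> real \<Rightarrow> real \<Rightarrow> real \<Rightarrow> real" where
  "Dn \<phi> n x y = integral\<^sup>L NN (\<lambda>z. H \<phi> n (x * tr n z) y)"
definition Gn :: "(real \<Rightarrow> real) \<Rightarrow> real \<Rightarrow> real \<Rightarrow> real" where
  "Gn \<phi> n s = integral\<^sup>L NN (\<lambda>z. \<phi> (s * tr n z))"
definition G :: "(real \<Rightarrow> real) \<Rightarrow> real \<Rightarrow> real" where
  "G \<phi> s = integral\<^sup>L NN (\<lambda>z. \<phi> (s * z))"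
definition D :: "(real \<Rightarrow> real) \<Rightarrow> real \<Rightarrow> real \<Rightarrow> real" where
  "D \<phi> x y = integral\<^sup>L NN (\<lambda>z. integral\<^sup>L NN (\<lambda>u. \<phi> (x * z + y * u)))"

abbreviation KN :: real where "KN \<equiv> integral\<^sup>L NN (\<lambda>z. z\<^sup>2)"

lemma NN_bnd:
  fixes g :: "real \<Rightarrow> real"
  assumes "g \<in> borel_measurable borel" "\<And>z. \<bar>g z\<bar> \<le> B"
  shows "\<bar>integral\<^sup>L NN g\<bar> \<le> B"
  by (rule prob_bound(2)[OF NN_prob NN_meas[OF assms(1)] assms(2)])

lemma NN_int:
  fixes g :: "real \<Rightarrow> real"
  assumes "g \<in> borel_measurable borel" "\<And>z. \<bar>g z\<bar> \<le> B"
  shows "integrable NN g"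
  by (rule prob_bound(1)[OF NN_prob NN_meas[OF assms(1)] assms(2)])

lemma NN_close:
  fixes g h :: "real \<Rightarrow> real"
  assumes "g \<in> borel_measurable borel" "h \<in> borel_measurable borel"
    "\<And>z. \<bar>g z\<bar> \<le> B" "\<And>z. \<bar>h z\<bar> \<le> B" "\<And>z. \<bar>g z - h z\<bar> \<le> d"
  shows "\<bar>integral\<^sup>L NN g - integral\<^sup>L NN h\<bar> \<le> d"
  by (rule prob_diff_const[OF NN_prob NN_int[OF assms(1,3)] NN_int[OF assms(2,4)] assms(5)])

lemma NN_measure_UNIV[simp]: "measure NN UNIV = 1"
proof -
  interpret prob_space NN by (rule NN_prob)
  have "prob (space NN) = 1" by (rule prob_space)
  then show ?thesis by simp
qed

lemma NN_const_int[simp]: "integrable NN (\<lambda>_. c::real)"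
proof -
  interpret prob_space NN by (rule NN_prob)
  show ?thesis by simp
qed

lemma NN_const[simp]: "integral\<^sup>L NN (\<lambda>_. c::real) = c"
proof -
  interpret prob_space NN by (rule NN_prob)
  have "prob (space NN) = 1" by (rule prob_space)
  then show ?thesis by simp
qed

lemma KN_nonneg: "0 \<le> KN"
  by (rule Bochner_Integration.integral_nonneg) simp

context
  fixes \<phi> :: "real \<Rightarrow> real" and B L :: real
  assumes phiB: "\<And>x. \<bar>\<phi> x\<bar> \<le> B" and phiL: "\<And>x y. \<bar>\<phi> x - \<phi> y\<bar> \<le> L * \<bar>x - y\<bar>"
    and L0: "0 \<le> L"
begin

lemma phi_meas[measurable]: "\<phi> \<in> borel_measurable borel"
  by (rule lip_meas[where L=L]) (simp add: dist_real_def phiL)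

lemma H_bound: "\<bar>H \<phi> n m s\<bar> \<le> B"
  unfolding H_def by (rule NN_bnd[where B=B]) (auto simp: phiB)

lemma H_lip:
  assumes n: "0 \<le> n"
  shows "\<bar>H \<phi> n m s - H \<phi> n m' s'\<bar> \<le> L * (\<bar>m - m'\<bar> + n * \<bar>s - s'\<bar>)"
  unfolding H_def
proof (rule NN_close[where B=B])
  fix u
  have eq: "(m + s * tr n u) - (m' + s' * tr n u) = (m - m') + (s - s') * tr n u"
    by (simp add: algebra_simps)
  have "\<bar>(m + s * tr n u) - (m' + s' * tr n u)\<bar> \<le> \<bar>m - m'\<bar> + \<bar>(s - s') * tr n u\<bar>"
    unfolding eq by (rule abs_triangle_ineq)
  then have "\<bar>(m + s * tr n u) - (m' + s' * tr n u)\<bar> \<le> \<bar>m - m'\<bar> + \<bar>s - s'\<bar> * \<bar>tr n u\<bar>"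
    by (simp add: abs_mult)
  also have "\<dots> \<le> \<bar>m - m'\<bar> + n * \<bar>s - s'\<bar>"
    using mult_left_mono[OF tr_abs[OF n, of u] abs_ge_zero[of "s - s'"]] by (simp add: mult.commute)
  finally show "\<bar>\<phi> (m + s * tr n u) - \<phi> (m' + s' * tr n u)\<bar> \<le> L * (\<bar>m - m'\<bar> + n * \<bar>s - s'\<bar>)"
    using phiL[of "m + s * tr n u" "m' + s' * tr n u"] L0 by (meson mult_left_mono order_trans)
qed (auto simp: phiB)

lemma H_meas: "0 \<le> n \<Longrightarrow> (\<lambda>m. H \<phi> n m s) \<in> borel_measurable borel"
  by (rule lip_meas[where L=L]) (use H_lip[of n _ s _ s] in \<open>simp add: dist_real_def\<close>)

lemma H_meas2[measurable]: "0 \<le> n \<Longrightarrow> (\<lambda>z. H \<phi> n (x * tr n z) y) \<in> borel_measurable borel"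
  using measurable_compose[of "\<lambda>z. x * tr n z" borel borel "\<lambda>m. H \<phi> n m y" borel] H_meas[of n y]
  by simp

lemma Dn_bound: "0 \<le> n \<Longrightarrow> \<bar>Dn \<phi> n x y\<bar> \<le> B"
  unfolding Dn_def by (rule NN_bnd[where B=B]) (auto simp: H_bound)

lemma Dn_lip:
  assumes n: "0 \<le> n"
  shows "\<bar>Dn \<phi> n x y - Dn \<phi> n x' y'\<bar> \<le> L * (n * \<bar>x - x'\<bar> + n * \<bar>y - y'\<bar>)"
  unfolding Dn_def
proof (rule NN_close[where B=B])
  fix z
  have "\<bar>x * tr n z - x' * tr n z\<bar> = \<bar>x - x'\<bar> * \<bar>tr n z\<bar>"
    by (subst left_diff_distrib[symmetric]) (rule abs_mult)
  also have "\<dots> \<le> n * \<bar>x - x'\<bar>" using mult_left_mono[OF tr_abs[OF n, of z] abs_ge_zero[of "x - x'"]] by (simp add: mult.commute)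
  finally have "\<bar>x * tr n z - x' * tr n z\<bar> \<le> n * \<bar>x - x'\<bar>" .
  show "\<bar>H \<phi> n (x * tr n z) y - H \<phi> n (x' * tr n z) y'\<bar> \<le> L * (n * \<bar>x - x'\<bar> + n * \<bar>y - y'\<bar>)"
  proof -
    have "L * (\<bar>x * tr n z - x' * tr n z\<bar> + n * \<bar>y - y'\<bar>) \<le> L * (n * \<bar>x - x'\<bar> + n * \<bar>y - y'\<bar>)"
      using \<open>\<bar>x * tr n z - x' * tr n z\<bar> \<le> n * \<bar>x - x'\<bar>\<close> L0 by (intro mult_left_mono) auto
    then show ?thesis using H_lip[OF n, of "x * tr n z" y "x' * tr n z" y'] by linarith
  qed
qed (use n in \<open>auto simp: H_bound\<close>)

lemma Gn_bound: "\<bar>Gn \<phi> n s\<bar> \<le> B"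
  unfolding Gn_def by (rule NN_bnd[where B=B]) (auto simp: phiB)

lemma G_bound: "\<bar>G \<phi> s\<bar> \<le> B"
  unfolding G_def by (rule NN_bnd[where B=B]) (auto simp: phiB)

lemma Gn_lip:
  assumes n: "0 \<le> n"
  shows "\<bar>Gn \<phi> n s - Gn \<phi> n s'\<bar> \<le> L * (n * \<bar>s - s'\<bar>)"
  unfolding Gn_def
proof (rule NN_close[where B=B])
  fix z
  have "\<bar>s * tr n z - s' * tr n z\<bar> = \<bar>s - s'\<bar> * \<bar>tr n z\<bar>"
    by (subst left_diff_distrib[symmetric]) (rule abs_mult)
  also have "\<dots> \<le> n * \<bar>s - s'\<bar>" using mult_left_mono[OF tr_abs[OF n, of z] abs_ge_zero[of "s - s'"]] by (simp add: mult.commute)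
  finally have "\<bar>s * tr n z - s' * tr n z\<bar> \<le> n * \<bar>s - s'\<bar>" .
  then show "\<bar>\<phi> (s * tr n z) - \<phi> (s' * tr n z)\<bar> \<le> L * (n * \<bar>s - s'\<bar>)"
    using phiL[of "s * tr n z" "s' * tr n z"] L0 by (meson mult_left_mono order_trans)
qed (auto simp: phiB)

lemma Dinner_lip:
  "\<bar>integral\<^sup>L NN (\<lambda>u. \<phi> (x * z + y * u)) - integral\<^sup>L NN (\<lambda>u. \<phi> (x * z' + y * u))\<bar> \<le> L * \<bar>x\<bar> * dist z z'"
proof (rule NN_close[where B=B])
  fix u
  have "(x * z + y * u) - (x * z' + y * u) = x * (z - z')" by (simp add: algebra_simps)
  then have "\<bar>(x * z + y * u) - (x * z' + y * u)\<bar> = \<bar>x\<bar> * dist z z'"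
    by (simp add: dist_real_def abs_mult)
  then show "\<bar>\<phi> (x * z + y * u) - \<phi> (x * z' + y * u)\<bar> \<le> L * \<bar>x\<bar> * dist z z'"
    using phiL[of "x * z + y * u" "x * z' + y * u"] by simp
qed (auto simp: phiB)

lemma Dinner_meas[measurable]: "(\<lambda>z. integral\<^sup>L NN (\<lambda>u. \<phi> (x * z + y * u))) \<in> borel_measurable borel"
  by (rule lip_meas[where L="L * \<bar>x\<bar>"]) (rule Dinner_lip)

lemma Dinner_bound: "\<bar>integral\<^sup>L NN (\<lambda>u. \<phi> (x * z + y * u))\<bar> \<le> B"
  by (rule NN_bnd[where B=B]) (auto simp: phiB)

lemma D_bound: "\<bar>D \<phi> x y\<bar> \<le> B"
  unfolding D_def by (rule NN_bnd[where B=B]) (auto simp: Dinner_bound)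

lemma trunc_step:
  assumes n: "0 < n" and x: "\<bar>x\<bar> \<le> b"
  shows "\<bar>x * tr n z - x * z\<bar> \<le> b * z\<^sup>2 / n"
proof -
  have "x * tr n z - x * z = x * (tr n z - z)" by (simp add: algebra_simps)
  then have "\<bar>x * tr n z - x * z\<bar> = \<bar>x\<bar> * \<bar>z - tr n z\<bar>"
    by (simp add: abs_mult abs_minus_commute)
  also have "\<dots> \<le> b * (z\<^sup>2 / n)"
    using x tr_err[OF n, of z] by (intro mult_mono) auto
  finally show ?thesis by simp
qed

lemma Dn_D:
  assumes n: "0 < n" and x: "\<bar>x\<bar> \<le> b" and y: "\<bar>y\<bar> \<le> b"
  shows "\<bar>Dn \<phi> n x y - D \<phi> x y\<bar> \<le> 2 * L * b * KN / n"
proof -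
  define c where "c = L * b / n"
  have inner: "\<bar>H \<phi> n (x * tr n z) y - integral\<^sup>L NN (\<lambda>u. \<phi> (x * z + y * u))\<bar>
      \<le> c * z\<^sup>2 + c * KN" for z
  proof -
    have "\<bar>H \<phi> n (x * tr n z) y - integral\<^sup>L NN (\<lambda>u. \<phi> (x * z + y * u))\<bar>
        \<le> integral\<^sup>L NN (\<lambda>u. c * z\<^sup>2 + c * u\<^sup>2)"
      unfolding H_def
    proof (rule prob_diff[OF NN_prob])
      show "integrable NN (\<lambda>u. \<phi> (x * tr n z + y * tr n u))" by (rule NN_int[where B=B]) (auto simp: phiB)
      show "integrable NN (\<lambda>u. \<phi> (x * z + y * u))" by (rule NN_int[where B=B]) (auto simp: phiB)
      show "integrable NN (\<lambda>u. c * z\<^sup>2 + c * u\<^sup>2)"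
        by (rule Bochner_Integration.integrable_add) (auto intro: NN_sq)
      show "AE u in NN. \<bar>\<phi> (x * tr n z + y * tr n u) - \<phi> (x * z + y * u)\<bar> \<le> c * z\<^sup>2 + c * u\<^sup>2"
      proof (rule AE_I2)
        fix u
        have "\<bar>(x * tr n z + y * tr n u) - (x * z + y * u)\<bar> \<le> \<bar>x * tr n z - x * z\<bar> + \<bar>y * tr n u - y * u\<bar>"
          by linarith
        also have "\<dots> \<le> b * z\<^sup>2 / n + b * u\<^sup>2 / n"
          using trunc_step[OF n x, of z] trunc_step[OF n y, of u] by linarith
        finally have "\<bar>\<phi> (x * tr n z + y * tr n u) - \<phi> (x * z + y * u)\<bar> \<le> L * (b * z\<^sup>2 / n + b * u\<^sup>2 / n)"
          using phiL[of "x * tr n z + y * tr n u" "x * z + y * u"] L0 by (meson mult_left_mono order_trans)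
        also have "L * (b * z\<^sup>2 / n + b * u\<^sup>2 / n) = c * z\<^sup>2 + c * u\<^sup>2"
          unfolding c_def by (simp add: distrib_left)
        finally show "\<bar>\<phi> (x * tr n z + y * tr n u) - \<phi> (x * z + y * u)\<bar> \<le> c * z\<^sup>2 + c * u\<^sup>2" .
      qed
    qed
    also have "\<dots> = c * z\<^sup>2 + c * KN"
      by (subst Bochner_Integration.integral_add) (auto intro: NN_sq)
    finally show ?thesis .
  qed
  have "\<bar>Dn \<phi> n x y - D \<phi> x y\<bar> \<le> integral\<^sup>L NN (\<lambda>z. c * z\<^sup>2 + c * KN)"
    unfolding Dn_def D_def
  proof (rule prob_diff[OF NN_prob])
    show "integrable NN (\<lambda>z. H \<phi> n (x * tr n z) y)" by (rule NN_int[where B=B]) (use n in \<open>auto simp: H_bound\<close>)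
    show "integrable NN (\<lambda>z. integral\<^sup>L NN (\<lambda>u. \<phi> (x * z + y * u)))" by (rule NN_int[where B=B]) (auto simp: Dinner_bound)
    show "integrable NN (\<lambda>z. c * z\<^sup>2 + c * KN)"
      by (rule Bochner_Integration.integrable_add) (auto intro: NN_sq)
    show "AE z in NN. \<bar>H \<phi> n (x * tr n z) y - integral\<^sup>L NN (\<lambda>u. \<phi> (x * z + y * u))\<bar> \<le> c * z\<^sup>2 + c * KN"
      using inner by (intro AE_I2)
  qed
  also have "\<dots> = c * KN + c * KN"
    by (subst Bochner_Integration.integral_add) (auto intro: NN_sq)
  also have "\<dots> = 2 * L * b * KN / n" unfolding c_def by simp
  finally show ?thesis .
qed

lemma Gn_G:
  assumes n: "0 < n" and s: "\<bar>s\<bar> \<le> c"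
  shows "\<bar>Gn \<phi> n s - G \<phi> s\<bar> \<le> L * c * KN / n"
proof -
  define k where "k = L * c / n"
  have "\<bar>Gn \<phi> n s - G \<phi> s\<bar> \<le> integral\<^sup>L NN (\<lambda>z. k * z\<^sup>2)"
    unfolding Gn_def G_def
  proof (rule prob_diff[OF NN_prob])
    show "integrable NN (\<lambda>z. \<phi> (s * tr n z))" by (rule NN_int[where B=B]) (auto simp: phiB)
    show "integrable NN (\<lambda>z. \<phi> (s * z))" by (rule NN_int[where B=B]) (auto simp: phiB)
    show "integrable NN (\<lambda>z. k * z\<^sup>2)" using NN_sq by (rule integrable_mult_right)
    show "AE z in NN. \<bar>\<phi> (s * tr n z) - \<phi> (s * z)\<bar> \<le> k * z\<^sup>2"
    proof (rule AE_I2)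
      fix z
      have "\<bar>\<phi> (s * tr n z) - \<phi> (s * z)\<bar> \<le> L * (c * z\<^sup>2 / n)"
        using phiL[of "s * tr n z" "s * z"] trunc_step[OF n s, of z] L0 by (meson mult_left_mono order_trans)
      also have "L * (c * z\<^sup>2 / n) = k * z\<^sup>2" unfolding k_def by simp
      finally show "\<bar>\<phi> (s * tr n z) - \<phi> (s * z)\<bar> \<le> k * z\<^sup>2" .
    qed
  qed
  also have "\<dots> = k * KN" by simp
  also have "\<dots> = L * c * KN / n" unfolding k_def by simp
  finally show ?thesis .
qed

end


lemma PP_loc: "pair_prob_space NN NN"
  unfolding pair_prob_space_def pair_sigma_finite_def
  using NN_prob prob_space_imp_sigma_finite by blast

lemma distr_NN_fst: "distr (NN \<Otimes>\<^sub>M NN) NN fst = NN"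
  using prob_space.distr_pair_fst[OF NN_prob, of NN] .

lemma distr_NN_snd: "distr (NN \<Otimes>\<^sub>M NN) NN snd = NN"
proof (intro measure_eqI)
  interpret PP: pair_prob_space NN NN by (rule PP_loc)
  fix A assume A: "A \<in> sets (distr (NN \<Otimes>\<^sub>M NN) NN snd)"
  from A have "emeasure (distr (NN \<Otimes>\<^sub>M NN) NN snd) A = emeasure (NN \<Otimes>\<^sub>M NN) (space NN \<times> A)"
    by (auto simp add: emeasure_distr space_pair_measure dest: sets.sets_into_space intro!: arg_cong2[where f=emeasure])
  moreover have "emeasure (NN \<Otimes>\<^sub>M NN) (space NN \<times> A) = emeasure NN (space NN) * emeasure NN A"
    using A by (intro sigma_finite_measure.emeasure_pair_measure_Times[OF prob_space_imp_sigma_finite[OF NN_prob]]) auto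
  ultimately show "emeasure (distr (NN \<Otimes>\<^sub>M NN) NN snd) A = emeasure NN A"
    using prob_space.emeasure_space_1[OF NN_prob] by simp
qed simp

lemma conv_pos:
  fixes \<phi> :: "real \<Rightarrow> real"
  assumes phim[measurable]: "\<phi> \<in> borel_measurable borel" and phiB: "\<And>x. \<bar>\<phi> x\<bar> \<le> B"
    and x: "0 < x" and y: "0 < y"
  shows "D \<phi> x y = G \<phi> (sqrt (x\<^sup>2 + y\<^sup>2))"
proof -
  interpret PP: pair_prob_space NN NN by (rule PP_loc)
  define \<sigma> where "\<sigma> = sqrt (x\<^sup>2 + y\<^sup>2)"
  have \<sigma>: "0 < \<sigma>" unfolding \<sigma>_def using x by (simp add: add_pos_nonneg)
  have sNN: "sets (NN \<Otimes>\<^sub>M NN) = sets (borel \<Otimes>\<^sub>M borel)"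
    by (intro sets_pair_measure_cong) simp_all
  have dfst: "distr (NN \<Otimes>\<^sub>M NN) borel fst = NN"
    using distr_cong[OF refl, of borel NN "NN \<Otimes>\<^sub>M NN" fst fst] distr_NN_fst by simp
  have dsnd: "distr (NN \<Otimes>\<^sub>M NN) borel snd = NN"
    using distr_cong[OF refl, of borel NN "NN \<Otimes>\<^sub>M NN" snd snd] distr_NN_snd by simp
  have did: "distr (NN \<Otimes>\<^sub>M NN) (borel \<Otimes>\<^sub>M borel) (\<lambda>x. (fst x, snd x)) = NN \<Otimes>\<^sub>M NN"
    using distr_id2[OF sNN[symmetric]] by simp
  have ind: "PP.indep_var borel fst borel snd"
    unfolding PP.indep_var_distribution_eq
    using dfst dsnd did by (simp add: measurable_cong_sets[OF sNN refl])
  have dist_fst: "distributed (NN \<Otimes>\<^sub>M NN) lborel fst std_normal_density"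
  proof -
    have "distr (NN \<Otimes>\<^sub>M NN) lborel fst = NN"
      using distr_cong[OF refl, of lborel NN "NN \<Otimes>\<^sub>M NN" fst fst] distr_NN_fst by simp
    then show ?thesis unfolding distributed_def NN_def
      by (simp add: measurable_cong_sets[OF sNN refl])
  qed
  have dist_snd: "distributed (NN \<Otimes>\<^sub>M NN) lborel snd std_normal_density"
  proof -
    have "distr (NN \<Otimes>\<^sub>M NN) lborel snd = NN"
      using distr_cong[OF refl, of lborel NN "NN \<Otimes>\<^sub>M NN" snd snd] distr_NN_snd by simp
    then show ?thesis unfolding distributed_def NN_def
      by (simp add: measurable_cong_sets[OF sNN refl])
  qed
  have dx: "distributed (NN \<Otimes>\<^sub>M NN) lborel (\<lambda>p. 0 + x * fst p) (normal_density (0 + x * 0) (\<bar>x\<bar> * 1))"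
    by (rule PP.normal_density_affine[OF dist_fst]) (use x in auto)
  have dy: "distributed (NN \<Otimes>\<^sub>M NN) lborel (\<lambda>p. 0 + y * snd p) (normal_density (0 + y * 0) (\<bar>y\<bar> * 1))"
    by (rule PP.normal_density_affine[OF dist_snd]) (use y in auto)
  have ds: "distributed (NN \<Otimes>\<^sub>M NN) lborel (\<lambda>p. 0 + \<sigma> * fst p) (normal_density (0 + \<sigma> * 0) (\<bar>\<sigma>\<bar> * 1))"
    by (rule PP.normal_density_affine[OF dist_fst]) (use \<sigma> in auto)
  have ind2: "PP.indep_var borel (\<lambda>p. x * fst p) borel (\<lambda>p. y * snd p)"
    using PP.indep_var_compose[OF ind, of "\<lambda>z. x * z" borel "\<lambda>z. y * z" borel]
    by (simp add: o_def)
  have dsum: "distributed (NN \<Otimes>\<^sub>M NN) lborel (\<lambda>p. x * fst p + y * snd p) (normal_density (0 + 0) (sqrt (x\<^sup>2 + y\<^sup>2)))"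
    by (rule PP.add_indep_normal[OF ind2]) (use x y dx dy in auto)
  have I1: "(\<integral>s. normal_density 0 \<sigma> s * \<phi> s \<partial>lborel) = (\<integral>p. \<phi> (x * fst p + y * snd p) \<partial>(NN \<Otimes>\<^sub>M NN))"
    by (rule distributed_integral) (use dsum in \<open>auto simp: \<sigma>_def\<close>)
  have I2: "(\<integral>s. normal_density 0 \<sigma> s * \<phi> s \<partial>lborel) = (\<integral>p. \<phi> (\<sigma> * fst p) \<partial>(NN \<Otimes>\<^sub>M NN))"
    by (rule distributed_integral) (use ds \<sigma> in auto)
  have I3: "(\<integral>p. \<phi> (\<sigma> * fst p) \<partial>(NN \<Otimes>\<^sub>M NN)) = G \<phi> \<sigma>"
  proof -
    have "integral\<^sup>L (distr (NN \<Otimes>\<^sub>M NN) NN fst) (\<lambda>z. \<phi> (\<sigma> * z)) = (\<integral>p. \<phi> (\<sigma> * fst p) \<partial>(NN \<Otimes>\<^sub>M NN))"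
    proof (rule integral_distr)
      show "fst \<in> measurable (NN \<Otimes>\<^sub>M NN) NN" by simp
      have "(\<lambda>z. \<phi> (\<sigma> * z)) \<in> borel_measurable borel" by measurable
      then show "(\<lambda>z. \<phi> (\<sigma> * z)) \<in> borel_measurable NN" by (rule NN_meas)
    qed
    then show ?thesis unfolding G_def distr_NN_fst by simp
  qed
  have I4: "(\<integral>p. \<phi> (x * fst p + y * snd p) \<partial>(NN \<Otimes>\<^sub>M NN)) = D \<phi> x y"
  proof -
    have int: "integrable (NN \<Otimes>\<^sub>M NN) (\<lambda>p. \<phi> (x * fst p + y * snd p))"
      by (rule prob_bound(1)[OF PP.prob_space_axioms, where B=B]) (auto simp: phiB)
    show ?thesis unfolding D_def using PP.integral_fst'[OF int] by simp
  qed
  show ?thesis using I1 I2 I3 I4 unfolding \<sigma>_def by simp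
qed

lemma conv:
  fixes \<phi> :: "real \<Rightarrow> real"
  assumes phim[measurable]: "\<phi> \<in> borel_measurable borel" and phiB: "\<And>x. \<bar>\<phi> x\<bar> \<le> B"
    and x: "0 \<le> x" and y: "0 \<le> y"
  shows "D \<phi> x y = G \<phi> (sqrt (x\<^sup>2 + y\<^sup>2))"
proof (cases "x = 0 \<or> y = 0")
  case True
  then show ?thesis
  proof
    assume x0: "x = 0"
    then show ?thesis using y unfolding D_def G_def by simp
  next
    assume y0: "y = 0"
    then show ?thesis using x unfolding D_def G_def by simp
  qed
next
  case False
  then show ?thesis using conv_pos[OF phim phiB] x y by simp
qed


lemma dist4:
  fixes p q :: "(real \<times> real \<times> real) \<times> real"
  shows "\<bar>fst (fst p) - fst (fst q)\<bar> \<le> dist p q"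
    "\<bar>fst (snd (fst p)) - fst (snd (fst q))\<bar> \<le> dist p q"
    "\<bar>snd (snd (fst p)) - snd (snd (fst q))\<bar> \<le> dist p q"
    "\<bar>snd p - snd q\<bar> \<le> dist p q"
proof -
  have a: "dist (fst p) (fst q) \<le> dist p q" by (rule dist_fst_le)
  have b: "dist (snd (fst p)) (snd (fst q)) \<le> dist (fst p) (fst q)" by (rule dist_snd_le)
  show "\<bar>fst (fst p) - fst (fst q)\<bar> \<le> dist p q"
    using a dist_fst_le[of "fst p" "fst q"] by (simp add: dist_real_def)
  show "\<bar>fst (snd (fst p)) - fst (snd (fst q))\<bar> \<le> dist p q"
    using a b dist_fst_le[of "snd (fst p)" "snd (fst q)"] by (simp add: dist_real_def)
  show "\<bar>snd (snd (fst p)) - snd (snd (fst q))\<bar> \<le> dist p q"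
    using a b dist_snd_le[of "snd (fst p)" "snd (fst q)"] by (simp add: dist_real_def)
  show "\<bar>snd p - snd q\<bar> \<le> dist p q"
    using dist_snd_le[of p q] by (simp add: dist_real_def)
qed

lemma dist3:
  fixes p q :: "(real \<times> real) \<times> real"
  shows "\<bar>fst (fst p) - fst (fst q)\<bar> \<le> dist p q"
    "\<bar>snd (fst p) - snd (fst q)\<bar> \<le> dist p q"
    "\<bar>snd p - snd q\<bar> \<le> dist p q"
proof -
  have a: "dist (fst p) (fst q) \<le> dist p q" by (rule dist_fst_le)
  show "\<bar>fst (fst p) - fst (fst q)\<bar> \<le> dist p q"
    using a dist_fst_le[of "fst p" "fst q"] by (simp add: dist_real_def)
  show "\<bar>snd (fst p) - snd (fst q)\<bar> \<le> dist p q"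
    using a dist_snd_le[of "fst p" "fst q"] by (simp add: dist_real_def)
  show "\<bar>snd p - snd q\<bar> \<le> dist p q"
    using dist_snd_le[of p q] by (simp add: dist_real_def)
qed

lemma dist2:
  fixes p q :: "real \<times> real"
  shows "\<bar>fst p - fst q\<bar> \<le> dist p q" "\<bar>snd p - snd q\<bar> \<le> dist p q"
  using dist_fst_le[of p q] dist_snd_le[of p q] by (simp_all add: dist_real_def)

lemma lip_comp:
  fixes f :: "real \<Rightarrow> real"
  assumes "\<bar>f A - f A'\<bar> \<le> L * \<bar>A - A'\<bar>" "\<bar>A - A'\<bar> \<le> K * d" "0 \<le> L"
  shows "\<bar>f A - f A'\<bar> \<le> (L * K) * d"
proof -
  have "L * \<bar>A - A'\<bar> \<le> L * (K * d)" using assms(2,3) by (rule mult_left_mono)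
  then show ?thesis using assms(1) by (simp add: mult.assoc)
qed

lemma vanish:
  fixes d K :: real
  assumes "\<And>n. 0 < n \<Longrightarrow> \<bar>d\<bar> \<le> K / n"
  shows "d = 0"
proof (rule ccontr)
  assume d: "d \<noteq> 0"
  define n where "n = 2 * (\<bar>K\<bar> + 1) / \<bar>d\<bar>"
  have n: "0 < n" using d unfolding n_def by (simp add: add_pos_nonneg)
  have "K / n = K * \<bar>d\<bar> / (2 * (\<bar>K\<bar> + 1))" unfolding n_def using d by simp
  also have "\<dots> \<le> \<bar>K\<bar> * \<bar>d\<bar> / (2 * (\<bar>K\<bar> + 1))"
    by (intro divide_right_mono mult_right_mono) auto
  also have "\<dots> < \<bar>d\<bar>"
  proof -
    have "\<bar>K\<bar> * \<bar>d\<bar> < 2 * (\<bar>K\<bar> + 1) * \<bar>d\<bar>" using d by (intro mult_strict_right_mono) auto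
    then have i: "\<bar>K\<bar> * \<bar>d\<bar> < \<bar>d\<bar> * (2 * (\<bar>K\<bar> + 1))" by (simp add: mult.commute)
    have pos: "0 < 2 * (\<bar>K\<bar> + 1)" by (simp add: add_pos_nonneg)
    show ?thesis using pos_divide_less_eq[OF pos] i by blast
  qed
  finally show False using assms[OF n] by linarith
qed

locale thm10 =
  fixes M :: "'w measure" and P :: "'w measure set"
    and V Vb e eb :: "'w \<Rightarrow> real" and sl su :: real
    and \<phi> :: "real \<Rightarrow> real" and B L :: real
  assumes space: "sublin_space M P"
    and measV: "V \<in> borel_measurable M" and measVb: "Vb \<in> borel_measurable M"
    and mease: "e \<in> borel_measurable M" and measeb: "eb \<in> borel_measurable M"
    and sig: "0 \<le> sl" "sl \<le> su"
    and V_max: "maximal_distr P V sl su"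
    and e_norm: "std_normal_distr P e"
    and V_e: "seq_indep P V e"
    and Vb_max: "maximal_distr P Vb sl su"
    and eb_norm: "std_normal_distr P eb"
    and chain1: "seq_indep P V Vb"
    and chain2: "seq_indep P (\<lambda>w. (V w, Vb w)) e"
    and chain3: "seq_indep P (\<lambda>w. (V w, Vb w, e w)) eb"
    and phiB: "\<And>x. \<bar>\<phi> x\<bar> \<le> B" and phiL: "\<And>x y. \<bar>\<phi> x - \<phi> y\<bar> \<le> L * \<bar>x - y\<bar>"
    and L0: "0 \<le> L"
begin

lemmas [measurable] = measV measVb mease measeb

lemma phim[measurable]: "\<phi> \<in> borel_measurable borel"
  by (rule lip_meas[where L=L]) (simp add: dist_real_def phiL)

abbreviation c :: "real \<Rightarrow> real" where "c \<equiv> cl sl su"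

lemma c_abs: "\<bar>c x\<bar> \<le> su" using cl_abs[OF sig] .
lemma su0: "0 \<le> su" using sig by linarith

lemma ne: "P \<noteq> {}" using space by (simp add: sublin_space_def)

lemmas Hb = H_bound[OF phiB phiL L0]
lemmas Hl = H_lip[OF phiB phiL L0]
lemmas Dnb = Dn_bound[OF phiB phiL L0]
lemmas Dnl = Dn_lip[OF phiB phiL L0]
lemmas Gnb = Gn_bound[OF phiB phiL L0]
lemmas Gnl = Gn_lip[OF phiB phiL L0]
lemmas Gb = G_bound[OF phiB phiL L0]
lemmas Db = D_bound[OF phiB phiL L0]

lemma SUPD_bound: "0 \<le> n \<Longrightarrow> \<bar>(SUP y\<in>{sl..su}. Dn \<phi> n x y)\<bar> \<le> B"
  using sig by (intro SUP_bound Dnb) auto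

lemma LHS_n:
  assumes n: "0 < n"
  shows "sup_exp P (\<lambda>w. \<phi> (c (V w) * tr n (e w) + c (Vb w) * tr n (eb w))) =
    (SUP x\<in>{sl..su}. SUP y\<in>{sl..su}. Dn \<phi> n x y)"
proof -
  have n0: "0 \<le> n" using n by simp
  define f3 :: "(real \<times> real \<times> real) \<times> real \<Rightarrow> real" where
    "f3 p = \<phi> (c (fst (fst p)) * tr n (snd (snd (fst p))) + c (fst (snd (fst p))) * tr n (snd p))" for p
  have f3: "C_bLip f3"
  proof (rule C_bLipI)
    show "\<bar>f3 p\<bar> \<le> B" for p unfolding f3_def by (rule phiB)
    fix p q :: "(real \<times> real \<times> real) \<times> real"
    define x y z u where "x = fst (fst p)" and "y = fst (snd (fst p))" and "z = snd (snd (fst p))" and "u = snd p"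
    define x' y' z' u' where "x' = fst (fst q)" and "y' = fst (snd (fst q))" and "z' = snd (snd (fst q))" and "u' = snd q"
    have d: "\<bar>x - x'\<bar> \<le> dist p q" "\<bar>y - y'\<bar> \<le> dist p q" "\<bar>z - z'\<bar> \<le> dist p q" "\<bar>u - u'\<bar> \<le> dist p q"
      unfolding x_def y_def z_def u_def x'_def y'_def z'_def u'_def by (rule dist4)+
    have p1: "\<bar>c x * tr n z - c x' * tr n z'\<bar> \<le> su * \<bar>tr n z - tr n z'\<bar> + n * \<bar>c x - c x'\<bar>"
      by (rule prod_lip[OF c_abs tr_abs[OF n0]])
    have p2: "\<bar>c y * tr n u - c y' * tr n u'\<bar> \<le> su * \<bar>tr n u - tr n u'\<bar> + n * \<bar>c y - c y'\<bar>"
      by (rule prod_lip[OF c_abs tr_abs[OF n0]])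
    have q1: "su * \<bar>tr n z - tr n z'\<bar> \<le> su * dist p q"
      using tr_lip[of n z z'] d(3) su0 by (intro mult_left_mono) auto
    have q2: "su * \<bar>tr n u - tr n u'\<bar> \<le> su * dist p q"
      using tr_lip[of n u u'] d(4) su0 by (intro mult_left_mono) auto
    have q3: "n * \<bar>c x - c x'\<bar> \<le> n * dist p q"
      using cl_lip[of sl su x x'] d(1) n0 by (intro mult_left_mono) auto
    have q4: "n * \<bar>c y - c y'\<bar> \<le> n * dist p q"
      using cl_lip[of sl su y y'] d(2) n0 by (intro mult_left_mono) auto
    have "\<bar>(c x * tr n z + c y * tr n u) - (c x' * tr n z' + c y' * tr n u')\<bar>
        \<le> \<bar>c x * tr n z - c x' * tr n z'\<bar> + \<bar>c y * tr n u - c y' * tr n u'\<bar>" by linarith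
    also have "\<dots> \<le> (2 * su + 2 * n) * dist p q" using p1 p2 q1 q2 q3 q4 by (simp add: algebra_simps)
    finally have "\<bar>(c x * tr n z + c y * tr n u) - (c x' * tr n z' + c y' * tr n u')\<bar> \<le> (2 * su + 2 * n) * dist p q" .
    then have "\<bar>f3 p - f3 q\<bar> \<le> (L * (2 * su + 2 * n)) * dist p q"
      unfolding f3_def x_def[symmetric] y_def[symmetric] z_def[symmetric] u_def[symmetric]
        x'_def[symmetric] y'_def[symmetric] z'_def[symmetric] u'_def[symmetric]
      by (intro lip_comp[OF phiL _ L0])
    then show "\<bar>f3 p - f3 q\<bar> \<le> (L * (2 * su + 2 * n)) * dist p q" .
  qed
  have inner3: "sup_exp P (\<lambda>w'. f3 ((V w, Vb w, e w), eb w')) = H \<phi> n (c (V w) * tr n (e w)) (c (Vb w))" for w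
  proof -
    define m s where "m = c (V w) * tr n (e w)" and "s = c (Vb w)"
    define \<psi> where "\<psi> u = \<phi> (m + s * tr n u)" for u
    have "C_bLip \<psi>"
    proof (rule C_bLipI)
      show "\<bar>\<psi> u\<bar> \<le> B" for u unfolding \<psi>_def by (rule phiB)
      fix u u' :: real
      have "\<bar>(m + s * tr n u) - (m + s * tr n u')\<bar> = \<bar>s\<bar> * \<bar>tr n u - tr n u'\<bar>"
        by (simp add: abs_mult[symmetric] right_diff_distrib)
      also have "\<dots> \<le> su * dist u u'"
        using tr_lip[of n u u'] c_abs[of "Vb w"] unfolding s_def dist_real_def
        by (intro mult_mono) auto
      finally show "\<bar>\<psi> u - \<psi> u'\<bar> \<le> (L * su) * dist u u'"
        unfolding \<psi>_def by (intro lip_comp[OF phiL _ L0])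
    qed
    then have "sup_exp P (\<lambda>w'. \<psi> (eb w')) = integral\<^sup>L NN \<psi>" by (rule norm_apply[OF eb_norm])
    then show ?thesis unfolding f3_def \<psi>_def H_def m_def s_def by simp
  qed
  have S3: "sup_exp P (\<lambda>w. \<phi> (c (V w) * tr n (e w) + c (Vb w) * tr n (eb w))) =
      sup_exp P (\<lambda>w. H \<phi> n (c (V w) * tr n (e w)) (c (Vb w)))"
  proof -
    have "sup_exp P (\<lambda>w. f3 ((V w, Vb w, e w), eb w)) = sup_exp P (\<lambda>w. sup_exp P (\<lambda>w'. f3 ((V w, Vb w, e w), eb w')))"
      using chain3 f3 unfolding seq_indep_def by blast
    also have "\<dots> = sup_exp P (\<lambda>w. H \<phi> n (c (V w) * tr n (e w)) (c (Vb w)))" by (simp only: inner3)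
    finally show ?thesis by (simp add: f3_def)
  qed
  define f2 :: "(real \<times> real) \<times> real \<Rightarrow> real" where
    "f2 p = H \<phi> n (c (fst (fst p)) * tr n (snd p)) (c (snd (fst p)))" for p
  have f2: "C_bLip f2"
  proof (rule C_bLipI)
    show "\<bar>f2 p\<bar> \<le> B" for p unfolding f2_def by (rule Hb)
    fix p q :: "(real \<times> real) \<times> real"
    define x y z where "x = fst (fst p)" and "y = snd (fst p)" and "z = snd p"
    define x' y' z' where "x' = fst (fst q)" and "y' = snd (fst q)" and "z' = snd q"
    have d: "\<bar>x - x'\<bar> \<le> dist p q" "\<bar>y - y'\<bar> \<le> dist p q" "\<bar>z - z'\<bar> \<le> dist p q"
      unfolding x_def y_def z_def x'_def y'_def z'_def by (rule dist3)+
    have p1: "\<bar>c x * tr n z - c x' * tr n z'\<bar> \<le> su * \<bar>tr n z - tr n z'\<bar> + n * \<bar>c x - c x'\<bar>"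
      by (rule prod_lip[OF c_abs tr_abs[OF n0]])
    have q1: "su * \<bar>tr n z - tr n z'\<bar> \<le> su * dist p q"
      using tr_lip[of n z z'] d(3) su0 by (intro mult_left_mono) auto
    have q3: "n * \<bar>c x - c x'\<bar> \<le> n * dist p q"
      using cl_lip[of sl su x x'] d(1) n0 by (intro mult_left_mono) auto
    have q4: "n * \<bar>c y - c y'\<bar> \<le> n * dist p q"
      using cl_lip[of sl su y y'] d(2) n0 by (intro mult_left_mono) auto
    have "\<bar>H \<phi> n (c x * tr n z) (c y) - H \<phi> n (c x' * tr n z') (c y')\<bar>
       \<le> L * (\<bar>c x * tr n z - c x' * tr n z'\<bar> + n * \<bar>c y - c y'\<bar>)" by (rule Hl[OF n0])
    also have "\<dots> \<le> L * ((su + 2 * n) * dist p q)"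
      using p1 q1 q3 q4 L0 by (intro mult_left_mono) (simp_all add: algebra_simps)
    finally show "\<bar>f2 p - f2 q\<bar> \<le> (L * (su + 2 * n)) * dist p q"
      unfolding f2_def x_def[symmetric] y_def[symmetric] z_def[symmetric]
        x'_def[symmetric] y'_def[symmetric] z'_def[symmetric] by (simp add: mult.assoc)
  qed
  have inner2: "sup_exp P (\<lambda>w'. f2 ((V w, Vb w), e w')) = Dn \<phi> n (c (V w)) (c (Vb w))" for w
  proof -
    define \<psi> where "\<psi> z = H \<phi> n (c (V w) * tr n z) (c (Vb w))" for z
    have "C_bLip \<psi>"
    proof (rule C_bLipI)
      show "\<bar>\<psi> u\<bar> \<le> B" for u unfolding \<psi>_def by (rule Hb)
      fix z z' :: real
      have "\<bar>c (V w) * tr n z - c (V w) * tr n z'\<bar> = \<bar>c (V w)\<bar> * \<bar>tr n z - tr n z'\<bar>"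
        by (simp add: abs_mult[symmetric] right_diff_distrib)
      also have "\<dots> \<le> su * dist z z'"
        using tr_lip[of n z z'] c_abs[of "V w"] unfolding dist_real_def
        by (intro mult_mono) auto
      finally have a: "\<bar>c (V w) * tr n z - c (V w) * tr n z'\<bar> \<le> su * dist z z'" .
      have "\<bar>\<psi> z - \<psi> z'\<bar> \<le> L * (\<bar>c (V w) * tr n z - c (V w) * tr n z'\<bar> + n * \<bar>c (Vb w) - c (Vb w)\<bar>)"
        unfolding \<psi>_def by (rule Hl[OF n0])
      also have "\<dots> \<le> L * (su * dist z z')" using a L0 by (intro mult_left_mono) auto
      finally show "\<bar>\<psi> z - \<psi> z'\<bar> \<le> (L * su) * dist z z'" by (simp add: mult.assoc)
    qed
    then have "sup_exp P (\<lambda>w'. \<psi> (e w')) = integral\<^sup>L NN \<psi>" by (rule norm_apply[OF e_norm])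
    then show ?thesis unfolding f2_def \<psi>_def Dn_def by simp
  qed
  have S2: "sup_exp P (\<lambda>w. H \<phi> n (c (V w) * tr n (e w)) (c (Vb w))) =
      sup_exp P (\<lambda>w. Dn \<phi> n (c (V w)) (c (Vb w)))"
  proof -
    have "sup_exp P (\<lambda>w. f2 ((V w, Vb w), e w)) = sup_exp P (\<lambda>w. sup_exp P (\<lambda>w'. f2 ((V w, Vb w), e w')))"
      using chain2 f2 unfolding seq_indep_def by blast
    also have "\<dots> = sup_exp P (\<lambda>w. Dn \<phi> n (c (V w)) (c (Vb w)))" by (simp only: inner2)
    finally show ?thesis by (simp add: f2_def)
  qed
  define f1 :: "real \<times> real \<Rightarrow> real" where "f1 p = Dn \<phi> n (c (fst p)) (c (snd p))" for p
  have f1: "C_bLip f1"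
  proof (rule C_bLipI)
    show "\<bar>f1 p\<bar> \<le> B" for p unfolding f1_def by (rule Dnb[OF n0])
    fix p q :: "real \<times> real"
    have q3: "n * \<bar>c (fst p) - c (fst q)\<bar> \<le> n * dist p q"
      using cl_lip[of sl su "fst p" "fst q"] dist2(1)[of p q] n0 by (intro mult_left_mono) auto
    have q4: "n * \<bar>c (snd p) - c (snd q)\<bar> \<le> n * dist p q"
      using cl_lip[of sl su "snd p" "snd q"] dist2(2)[of p q] n0 by (intro mult_left_mono) auto
    have "\<bar>f1 p - f1 q\<bar> \<le> L * (n * \<bar>c (fst p) - c (fst q)\<bar> + n * \<bar>c (snd p) - c (snd q)\<bar>)"
      unfolding f1_def by (rule Dnl[OF n0])
    also have "\<dots> \<le> L * ((2 * n) * dist p q)" using q3 q4 L0 by (intro mult_left_mono) auto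
    finally show "\<bar>f1 p - f1 q\<bar> \<le> (L * (2 * n)) * dist p q" by (simp add: mult.assoc)
  qed
  have inner1: "sup_exp P (\<lambda>w'. f1 (V w, Vb w')) = (SUP y\<in>{sl..su}. Dn \<phi> n (c (V w)) y)" for w
  proof -
    define \<psi> where "\<psi> y = Dn \<phi> n (c (V w)) (c y)" for y
    have "C_bLip \<psi>"
    proof (rule C_bLipI)
      show "\<bar>\<psi> u\<bar> \<le> B" for u unfolding \<psi>_def by (rule Dnb[OF n0])
      fix y y' :: real
      have "\<bar>\<psi> y - \<psi> y'\<bar> \<le> L * (n * \<bar>c (V w) - c (V w)\<bar> + n * \<bar>c y - c y'\<bar>)"
        unfolding \<psi>_def by (rule Dnl[OF n0])
      also have "\<dots> \<le> L * (n * dist y y')"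
        using cl_lip[of sl su y y'] L0 n0 by (auto simp: dist_real_def intro!: mult_left_mono)
      finally show "\<bar>\<psi> y - \<psi> y'\<bar> \<le> (L * n) * dist y y'" by (simp add: mult.assoc)
    qed
    then have "sup_exp P (\<lambda>w'. \<psi> (Vb w')) = (SUP y\<in>{sl..su}. \<psi> y)" by (rule max_apply[OF Vb_max])
    also have "\<dots> = (SUP y\<in>{sl..su}. Dn \<phi> n (c (V w)) y)"
      unfolding \<psi>_def by (intro SUP_cong) (auto simp: cl_id)
    finally show ?thesis unfolding f1_def \<psi>_def by simp
  qed
  have S1: "sup_exp P (\<lambda>w. Dn \<phi> n (c (V w)) (c (Vb w))) =
      sup_exp P (\<lambda>w. (SUP y\<in>{sl..su}. Dn \<phi> n (c (V w)) y))"
  proof -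
    have "sup_exp P (\<lambda>w. f1 (V w, Vb w)) = sup_exp P (\<lambda>w. sup_exp P (\<lambda>w'. f1 (V w, Vb w')))"
      using chain1 f1 unfolding seq_indep_def by blast
    also have "\<dots> = sup_exp P (\<lambda>w. (SUP y\<in>{sl..su}. Dn \<phi> n (c (V w)) y))" by (simp only: inner1)
    finally show ?thesis by (simp add: f1_def)
  qed
  define \<psi>0 where "\<psi>0 x = (SUP y\<in>{sl..su}. Dn \<phi> n (c x) y)" for x
  have f0: "C_bLip \<psi>0"
  proof (rule C_bLipI)
    show "\<bar>\<psi>0 x\<bar> \<le> B" for x unfolding \<psi>0_def by (rule SUPD_bound[OF n0])
    fix x x' :: real
    have "\<bar>\<psi>0 x - \<psi>0 x'\<bar> \<le> L * (n * dist x x')"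
      unfolding \<psi>0_def
    proof (rule SUP_close[where B=B])
      show "{sl..su} \<noteq> {}" using sig by simp
      fix y
      show "\<bar>Dn \<phi> n (c x) y\<bar> \<le> B" "\<bar>Dn \<phi> n (c x') y\<bar> \<le> B" by (rule Dnb[OF n0])+
      have "\<bar>Dn \<phi> n (c x) y - Dn \<phi> n (c x') y\<bar> \<le> L * (n * \<bar>c x - c x'\<bar> + n * \<bar>y - y\<bar>)"
        by (rule Dnl[OF n0])
      also have "\<dots> \<le> L * (n * dist x x')"
        using cl_lip[of sl su x x'] L0 n0 by (auto simp: dist_real_def intro!: mult_left_mono)
      finally show "\<bar>Dn \<phi> n (c x) y - Dn \<phi> n (c x') y\<bar> \<le> L * (n * dist x x')" .
    qed
    then show "\<bar>\<psi>0 x - \<psi>0 x'\<bar> \<le> (L * n) * dist x x'" by (simp add: mult.assoc)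
  qed
  have S0: "sup_exp P (\<lambda>w. \<psi>0 (V w)) = (SUP x\<in>{sl..su}. \<psi>0 x)"
    by (rule max_apply[OF V_max f0])
  have S0': "(SUP x\<in>{sl..su}. \<psi>0 x) = (SUP x\<in>{sl..su}. SUP y\<in>{sl..su}. Dn \<phi> n x y)"
    unfolding \<psi>0_def by (intro SUP_cong) (auto simp: cl_id)
  have S1': "sup_exp P (\<lambda>w. (SUP y\<in>{sl..su}. Dn \<phi> n (c (V w)) y)) = sup_exp P (\<lambda>w. \<psi>0 (V w))"
    unfolding \<psi>0_def ..
  show ?thesis using S3 S2 S1 S1' S0 S0' by simp
qed


lemma RHS_n:
  assumes n: "0 < n"
  shows "sup_exp P (\<lambda>w. \<phi> (sqrt 2 * c (V w) * tr n (e w))) = (SUP x\<in>{sl..su}. Gn \<phi> n (sqrt 2 * x))"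
proof -
  have n0: "0 \<le> n" using n by simp
  have cs: "\<bar>sqrt 2 * c x\<bar> \<le> sqrt 2 * su" for x
    using c_abs[of x] by (simp add: abs_mult)
  have cd: "\<bar>sqrt 2 * c x - sqrt 2 * c x'\<bar> \<le> sqrt 2 * \<bar>x - x'\<bar>" for x x'
  proof -
    have "sqrt 2 * c x - sqrt 2 * c x' = sqrt 2 * (c x - c x')" by (simp add: algebra_simps)
    then have "\<bar>sqrt 2 * c x - sqrt 2 * c x'\<bar> = sqrt 2 * \<bar>c x - c x'\<bar>"
      by (simp add: abs_mult)
    also have "\<dots> \<le> sqrt 2 * \<bar>x - x'\<bar>" using cl_lip[of sl su x x'] by (intro mult_left_mono) auto
    finally show ?thesis .
  qed
  define f :: "real \<times> real \<Rightarrow> real" where "f p = \<phi> (sqrt 2 * c (fst p) * tr n (snd p))" for p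
  have fL: "C_bLip f"
  proof (rule C_bLipI)
    show "\<bar>f p\<bar> \<le> B" for p unfolding f_def by (rule phiB)
    fix p q :: "real \<times> real"
    have p1: "\<bar>(sqrt 2 * c (fst p)) * tr n (snd p) - (sqrt 2 * c (fst q)) * tr n (snd q)\<bar>
        \<le> (sqrt 2 * su) * \<bar>tr n (snd p) - tr n (snd q)\<bar> + n * \<bar>sqrt 2 * c (fst p) - sqrt 2 * c (fst q)\<bar>"
      by (rule prod_lip[OF cs tr_abs[OF n0]])
    have q1: "(sqrt 2 * su) * \<bar>tr n (snd p) - tr n (snd q)\<bar> \<le> (sqrt 2 * su) * dist p q"
      using tr_lip[of n "snd p" "snd q"] dist2(2)[of p q] su0 by (intro mult_left_mono) auto
    have q2: "n * \<bar>sqrt 2 * c (fst p) - sqrt 2 * c (fst q)\<bar> \<le> n * (sqrt 2 * dist p q)"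
      using cd[of "fst p" "fst q"] dist2(1)[of p q] n0
      by (intro mult_left_mono) (auto intro: order_trans)
    have "\<bar>(sqrt 2 * c (fst p)) * tr n (snd p) - (sqrt 2 * c (fst q)) * tr n (snd q)\<bar>
        \<le> (sqrt 2 * su + n * sqrt 2) * dist p q"
      using p1 q1 q2 by (simp add: algebra_simps)
    then show "\<bar>f p - f q\<bar> \<le> (L * (sqrt 2 * su + n * sqrt 2)) * dist p q"
      unfolding f_def by (intro lip_comp[OF phiL _ L0])
  qed
  have inner: "sup_exp P (\<lambda>w'. f (V w, e w')) = Gn \<phi> n (sqrt 2 * c (V w))" for w
  proof -
    define s where "s = sqrt 2 * c (V w)"
    define \<psi> where "\<psi> z = \<phi> (s * tr n z)" for z
    have "C_bLip \<psi>"
    proof (rule C_bLipI)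
      show "\<bar>\<psi> u\<bar> \<le> B" for u unfolding \<psi>_def by (rule phiB)
      fix u u' :: real
      have "\<bar>s * tr n u - s * tr n u'\<bar> = \<bar>s\<bar> * \<bar>tr n u - tr n u'\<bar>"
        by (simp add: abs_mult[symmetric] right_diff_distrib)
      also have "\<dots> \<le> (sqrt 2 * su) * dist u u'"
        using tr_lip[of n u u'] cs[of "V w"] unfolding s_def dist_real_def
        by (intro mult_mono) auto
      finally show "\<bar>\<psi> u - \<psi> u'\<bar> \<le> (L * (sqrt 2 * su)) * dist u u'"
        unfolding \<psi>_def by (intro lip_comp[OF phiL _ L0])
    qed
    then have "sup_exp P (\<lambda>w'. \<psi> (e w')) = integral\<^sup>L NN \<psi>" by (rule norm_apply[OF e_norm])
    then show ?thesis unfolding f_def \<psi>_def Gn_def s_def by (simp add: mult.assoc)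
  qed
  have S1: "sup_exp P (\<lambda>w. \<phi> (sqrt 2 * c (V w) * tr n (e w))) = sup_exp P (\<lambda>w. Gn \<phi> n (sqrt 2 * c (V w)))"
  proof -
    have "sup_exp P (\<lambda>w. f (V w, e w)) = sup_exp P (\<lambda>w. sup_exp P (\<lambda>w'. f (V w, e w')))"
      using V_e fL unfolding seq_indep_def by blast
    also have "\<dots> = sup_exp P (\<lambda>w. Gn \<phi> n (sqrt 2 * c (V w)))" by (simp only: inner)
    finally show ?thesis by (simp add: f_def)
  qed
  define \<psi>0 where "\<psi>0 x = Gn \<phi> n (sqrt 2 * c x)" for x
  have f0: "C_bLip \<psi>0"
  proof (rule C_bLipI)
    show "\<bar>\<psi>0 x\<bar> \<le> B" for x unfolding \<psi>0_def by (rule Gnb)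
    fix x x' :: real
    have "\<bar>\<psi>0 x - \<psi>0 x'\<bar> \<le> L * (n * \<bar>sqrt 2 * c x - sqrt 2 * c x'\<bar>)"
      unfolding \<psi>0_def by (rule Gnl[OF n0])
    also have "\<dots> \<le> L * (n * (sqrt 2 * dist x x'))"
      using cd[of x x'] L0 n0 by (auto simp: dist_real_def intro!: mult_left_mono)
    finally show "\<bar>\<psi>0 x - \<psi>0 x'\<bar> \<le> (L * n * sqrt 2) * dist x x'" by (simp add: mult.assoc)
  qed
  have S0: "sup_exp P (\<lambda>w. \<psi>0 (V w)) = (SUP x\<in>{sl..su}. \<psi>0 x)"
    by (rule max_apply[OF V_max f0])
  have S0': "(SUP x\<in>{sl..su}. \<psi>0 x) = (SUP x\<in>{sl..su}. Gn \<phi> n (sqrt 2 * x))"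
    unfolding \<psi>0_def by (intro SUP_cong) (auto simp: cl_id)
  show ?thesis using S1 S0 S0' unfolding \<psi>0_def by simp
qed

lemma LHS_err:
  "\<exists>K. \<forall>n>0. \<bar>sup_exp P (\<lambda>w. \<phi> (V w * e w + Vb w * eb w)) -
     sup_exp P (\<lambda>w. \<phi> (c (V w) * tr n (e w) + c (Vb w) * tr n (eb w)))\<bar> \<le> K / n"
proof -
  obtain Ke where Ke: "\<And>Q. Q \<in> P \<Longrightarrow> integrable Q (\<lambda>w. (e w)\<^sup>2) \<and> integral\<^sup>L Q (\<lambda>w. (e w)\<^sup>2) \<le> Ke"
    using norm_sq[OF space e_norm] by blast
  obtain Keb where Keb: "\<And>Q. Q \<in> P \<Longrightarrow> integrable Q (\<lambda>w. (eb w)\<^sup>2) \<and> integral\<^sup>L Q (\<lambda>w. (eb w)\<^sup>2) \<le> Keb"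
    using norm_sq[OF space eb_norm] by blast
  have "\<bar>sup_exp P (\<lambda>w. \<phi> (V w * e w + Vb w * eb w)) -
     sup_exp P (\<lambda>w. \<phi> (c (V w) * tr n (e w) + c (Vb w) * tr n (eb w)))\<bar> \<le> (L * su * (Ke + Keb)) / n"
    if n: "0 < n" for n
  proof (rule sup_diff[OF ne])
    show "bdd_above ((\<lambda>Q. integral\<^sup>L Q (\<lambda>w. \<phi> (V w * e w + Vb w * eb w))) ` P)"
      by (rule bdd_of_bound[OF space _ phiB]) measurable
    show "bdd_above ((\<lambda>Q. integral\<^sup>L Q (\<lambda>w. \<phi> (c (V w) * tr n (e w) + c (Vb w) * tr n (eb w)))) ` P)"
      by (rule bdd_of_bound[OF space _ phiB]) measurable
    fix Q assume Q: "Q \<in> P"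
    interpret Q: prob_space Q using subQ(1)[OF space Q] .
    define k where "k = L * su / n"
    have k0: "0 \<le> k" unfolding k_def using L0 su0 n by simp
    have "\<bar>integral\<^sup>L Q (\<lambda>w. \<phi> (V w * e w + Vb w * eb w)) -
        integral\<^sup>L Q (\<lambda>w. \<phi> (c (V w) * tr n (e w) + c (Vb w) * tr n (eb w)))\<bar>
      \<le> integral\<^sup>L Q (\<lambda>w. k * (e w)\<^sup>2 + k * (eb w)\<^sup>2)"
    proof (rule prob_diff[OF subQ(1)[OF space Q]])
      show "integrable Q (\<lambda>w. \<phi> (V w * e w + Vb w * eb w))"
        by (rule prob_bound(1)[OF subQ(1)[OF space Q] measQ[OF space Q] phiB]) measurable
      show "integrable Q (\<lambda>w. \<phi> (c (V w) * tr n (e w) + c (Vb w) * tr n (eb w)))"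
        by (rule prob_bound(1)[OF subQ(1)[OF space Q] measQ[OF space Q] phiB]) measurable
      show "integrable Q (\<lambda>w. k * (e w)\<^sup>2 + k * (eb w)\<^sup>2)"
        using Ke[OF Q] Keb[OF Q] by auto
      have ae1: "AE w in Q. sl \<le> V w \<and> V w \<le> su" by (rule max_AE[OF space V_max sig(2) Q])
      have ae2: "AE w in Q. sl \<le> Vb w \<and> Vb w \<le> su" by (rule max_AE[OF space Vb_max sig(2) Q])
      show "AE w in Q. \<bar>\<phi> (V w * e w + Vb w * eb w) - \<phi> (c (V w) * tr n (e w) + c (Vb w) * tr n (eb w))\<bar>
          \<le> k * (e w)\<^sup>2 + k * (eb w)\<^sup>2"
        using ae1 ae2
      proof eventually_elim
        case (elim w)
        have cV: "c (V w) = V w" "c (Vb w) = Vb w" using elim by (simp_all add: cl_id)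
        have aV: "\<bar>V w\<bar> \<le> su" "\<bar>Vb w\<bar> \<le> su" using elim sig by auto
        have t1: "\<bar>V w * tr n (e w) - V w * e w\<bar> \<le> su * (e w)\<^sup>2 / n"
          by (rule trunc_step[OF phiB phiL L0 n aV(1)])
        have t2: "\<bar>Vb w * tr n (eb w) - Vb w * eb w\<bar> \<le> su * (eb w)\<^sup>2 / n"
          by (rule trunc_step[OF phiB phiL L0 n aV(2)])
        have "\<bar>(V w * e w + Vb w * eb w) - (V w * tr n (e w) + Vb w * tr n (eb w))\<bar>
            \<le> su * (e w)\<^sup>2 / n + su * (eb w)\<^sup>2 / n" using t1 t2 by linarith
        then have "\<bar>(V w * e w + Vb w * eb w) - (V w * tr n (e w) + Vb w * tr n (eb w))\<bar>
            \<le> 1 * (su * (e w)\<^sup>2 / n + su * (eb w)\<^sup>2 / n)" by simp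
        then have "\<bar>\<phi> (V w * e w + Vb w * eb w) - \<phi> (V w * tr n (e w) + Vb w * tr n (eb w))\<bar>
            \<le> (L * 1) * (su * (e w)\<^sup>2 / n + su * (eb w)\<^sup>2 / n)"
          by (intro lip_comp[OF phiL _ L0])
        also have "\<dots> = k * (e w)\<^sup>2 + k * (eb w)\<^sup>2" unfolding k_def by (simp add: algebra_simps)
        finally show ?case unfolding cV .
      qed
    qed
    also have "\<dots> = k * integral\<^sup>L Q (\<lambda>w. (e w)\<^sup>2) + k * integral\<^sup>L Q (\<lambda>w. (eb w)\<^sup>2)"
      using Ke[OF Q] Keb[OF Q] by simp
    also have "\<dots> \<le> k * Ke + k * Keb"
      using Ke[OF Q] Keb[OF Q] k0 by (intro add_mono mult_left_mono) auto
    also have "\<dots> = (L * su * (Ke + Keb)) / n" unfolding k_def by (simp add: algebra_simps add_divide_distrib)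
    finally show "\<bar>integral\<^sup>L Q (\<lambda>w. \<phi> (V w * e w + Vb w * eb w)) -
        integral\<^sup>L Q (\<lambda>w. \<phi> (c (V w) * tr n (e w) + c (Vb w) * tr n (eb w)))\<bar> \<le> (L * su * (Ke + Keb)) / n" .
  qed
  then show ?thesis by blast
qed

lemma RHS_err:
  "\<exists>K. \<forall>n>0. \<bar>sup_exp P (\<lambda>w. \<phi> (sqrt 2 * (V w * e w))) -
     sup_exp P (\<lambda>w. \<phi> (sqrt 2 * c (V w) * tr n (e w)))\<bar> \<le> K / n"
proof -
  obtain Ke where Ke: "\<And>Q. Q \<in> P \<Longrightarrow> integrable Q (\<lambda>w. (e w)\<^sup>2) \<and> integral\<^sup>L Q (\<lambda>w. (e w)\<^sup>2) \<le> Ke"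
    using norm_sq[OF space e_norm] by blast
  have "\<bar>sup_exp P (\<lambda>w. \<phi> (sqrt 2 * (V w * e w))) -
     sup_exp P (\<lambda>w. \<phi> (sqrt 2 * c (V w) * tr n (e w)))\<bar> \<le> (L * (sqrt 2 * su) * Ke) / n"
    if n: "0 < n" for n
  proof (rule sup_diff[OF ne])
    show "bdd_above ((\<lambda>Q. integral\<^sup>L Q (\<lambda>w. \<phi> (sqrt 2 * (V w * e w)))) ` P)"
      by (rule bdd_of_bound[OF space _ phiB]) measurable
    show "bdd_above ((\<lambda>Q. integral\<^sup>L Q (\<lambda>w. \<phi> (sqrt 2 * c (V w) * tr n (e w)))) ` P)"
      by (rule bdd_of_bound[OF space _ phiB]) measurable
    fix Q assume Q: "Q \<in> P"
    interpret Q: prob_space Q using subQ(1)[OF space Q] .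
    define k where "k = L * (sqrt 2 * su) / n"
    have k0: "0 \<le> k" unfolding k_def using L0 su0 n by simp
    have "\<bar>integral\<^sup>L Q (\<lambda>w. \<phi> (sqrt 2 * (V w * e w))) -
        integral\<^sup>L Q (\<lambda>w. \<phi> (sqrt 2 * c (V w) * tr n (e w)))\<bar>
      \<le> integral\<^sup>L Q (\<lambda>w. k * (e w)\<^sup>2)"
    proof (rule prob_diff[OF subQ(1)[OF space Q]])
      show "integrable Q (\<lambda>w. \<phi> (sqrt 2 * (V w * e w)))"
        by (rule prob_bound(1)[OF subQ(1)[OF space Q] measQ[OF space Q] phiB]) measurable
      show "integrable Q (\<lambda>w. \<phi> (sqrt 2 * c (V w) * tr n (e w)))"
        by (rule prob_bound(1)[OF subQ(1)[OF space Q] measQ[OF space Q] phiB]) measurable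
      show "integrable Q (\<lambda>w. k * (e w)\<^sup>2)"
        using Ke[OF Q] by auto
      have ae1: "AE w in Q. sl \<le> V w \<and> V w \<le> su" by (rule max_AE[OF space V_max sig(2) Q])
      show "AE w in Q. \<bar>\<phi> (sqrt 2 * (V w * e w)) - \<phi> (sqrt 2 * c (V w) * tr n (e w))\<bar> \<le> k * (e w)\<^sup>2"
        using ae1
      proof eventually_elim
        case (elim w)
        have cV: "c (V w) = V w" using elim by (simp add: cl_id)
        have aV: "\<bar>sqrt 2 * V w\<bar> \<le> sqrt 2 * su" using elim sig by (auto simp: abs_mult)
        have t1: "\<bar>(sqrt 2 * V w) * tr n (e w) - (sqrt 2 * V w) * e w\<bar> \<le> (sqrt 2 * su) * (e w)\<^sup>2 / n"
          by (rule trunc_step[OF phiB phiL L0 n aV])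
        then have "\<bar>(sqrt 2 * V w) * e w - (sqrt 2 * V w) * tr n (e w)\<bar> \<le> (sqrt 2 * su) * (e w)\<^sup>2 / n"
          by linarith
        then have "\<bar>(sqrt 2 * V w) * e w - (sqrt 2 * V w) * tr n (e w)\<bar> \<le> 1 * ((sqrt 2 * su) * (e w)\<^sup>2 / n)"
          by simp
        then have "\<bar>\<phi> ((sqrt 2 * V w) * e w) - \<phi> ((sqrt 2 * V w) * tr n (e w))\<bar>
            \<le> (L * 1) * ((sqrt 2 * su) * (e w)\<^sup>2 / n)"
          by (intro lip_comp[OF phiL _ L0])
        also have "\<dots> = k * (e w)\<^sup>2" unfolding k_def by (simp add: algebra_simps)
        finally show ?case unfolding cV by (simp add: mult.assoc)
      qed
    qed
    also have "\<dots> = k * integral\<^sup>L Q (\<lambda>w. (e w)\<^sup>2)"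
      using Ke[OF Q] by simp
    also have "\<dots> \<le> k * Ke"
      using Ke[OF Q] k0 by (intro mult_left_mono) auto
    also have "\<dots> = (L * (sqrt 2 * su) * Ke) / n" unfolding k_def by (simp add: algebra_simps)
    finally show "\<bar>integral\<^sup>L Q (\<lambda>w. \<phi> (sqrt 2 * (V w * e w))) -
        integral\<^sup>L Q (\<lambda>w. \<phi> (sqrt 2 * c (V w) * tr n (e w)))\<bar> \<le> (L * (sqrt 2 * su) * Ke) / n" .
  qed
  then show ?thesis by blast
qed


lemma Ine: "{sl..su} \<noteq> {}" using sig by simp

lemma T_eq: "(SUP x\<in>{sl..su}. SUP y\<in>{sl..su}. D \<phi> x y) = (SUP x\<in>{sl..su}. G \<phi> (sqrt 2 * x))"
proof -
  have Dc: "D \<phi> x y = G \<phi> (sqrt (x\<^sup>2 + y\<^sup>2))" if "x \<in> {sl..su}" "y \<in> {sl..su}" for x y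
    using that sig by (intro conv[OF phim phiB]) auto
  have bD: "bdd_above ((\<lambda>y. D \<phi> x y) ` {sl..su})" for x
    using Db by (auto simp: bdd_above_def abs_le_iff intro!: exI[of _ B])
  have bS: "bdd_above ((\<lambda>x. SUP y\<in>{sl..su}. D \<phi> x y) ` {sl..su})"
    using SUP_bound[OF Ine, of "\<lambda>y. D \<phi> _ y" B] Db by (auto simp: bdd_above_def abs_le_iff intro!: exI[of _ B])
  have bG: "bdd_above ((\<lambda>x. G \<phi> (sqrt 2 * x)) ` {sl..su})"
    using Gb by (auto simp: bdd_above_def abs_le_iff intro!: exI[of _ B])
  show ?thesis
  proof (rule antisym)
    show "(SUP x\<in>{sl..su}. SUP y\<in>{sl..su}. D \<phi> x y) \<le> (SUP x\<in>{sl..su}. G \<phi> (sqrt 2 * x))"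
    proof (rule cSUP_least[OF Ine], rule cSUP_least[OF Ine])
      fix x y assume x: "x \<in> {sl..su}" and y: "y \<in> {sl..su}"
      define s where "s = sqrt ((x\<^sup>2 + y\<^sup>2) / 2)"
      have x2: "sl\<^sup>2 \<le> x\<^sup>2" "x\<^sup>2 \<le> su\<^sup>2" using x sig by (auto intro: power_mono)
      have y2: "sl\<^sup>2 \<le> y\<^sup>2" "y\<^sup>2 \<le> su\<^sup>2" using y sig by (auto intro: power_mono)
      have "sqrt (sl\<^sup>2) \<le> s" unfolding s_def using x2 y2 by (intro real_sqrt_le_mono) simp
      moreover have "s \<le> sqrt (su\<^sup>2)" unfolding s_def using x2 y2 by (intro real_sqrt_le_mono) simp
      ultimately have sI: "s \<in> {sl..su}" using sig by simp
      have "sqrt 2 * s = sqrt (2 * ((x\<^sup>2 + y\<^sup>2) / 2))" unfolding s_def by (rule real_sqrt_mult[symmetric])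
      also have "\<dots> = sqrt (x\<^sup>2 + y\<^sup>2)" by simp
      finally have "D \<phi> x y = G \<phi> (sqrt 2 * s)" using Dc[OF x y] by simp
      also have "\<dots> \<le> (SUP x\<in>{sl..su}. G \<phi> (sqrt 2 * x))" by (rule cSUP_upper[OF sI bG])
      finally show "D \<phi> x y \<le> (SUP x\<in>{sl..su}. G \<phi> (sqrt 2 * x))" .
    qed
    show "(SUP x\<in>{sl..su}. G \<phi> (sqrt 2 * x)) \<le> (SUP x\<in>{sl..su}. SUP y\<in>{sl..su}. D \<phi> x y)"
    proof (rule cSUP_least[OF Ine])
      fix x assume x: "x \<in> {sl..su}"
      have x0: "0 \<le> x" using x sig by auto
      have "sqrt (x\<^sup>2 + x\<^sup>2) = sqrt (2 * x\<^sup>2)" by simp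
      also have "\<dots> = sqrt 2 * sqrt (x\<^sup>2)" by (rule real_sqrt_mult)
      also have "\<dots> = sqrt 2 * x" using x0 by simp
      finally have "sqrt (x\<^sup>2 + x\<^sup>2) = sqrt 2 * x" .
      then have "G \<phi> (sqrt 2 * x) = D \<phi> x x" using Dc[OF x x] by simp
      also have "\<dots> \<le> (SUP y\<in>{sl..su}. D \<phi> x y)" by (rule cSUP_upper[OF x bD])
      also have "\<dots> \<le> (SUP x\<in>{sl..su}. SUP y\<in>{sl..su}. D \<phi> x y)" by (rule cSUP_upper[OF x bS])
      finally show "G \<phi> (sqrt 2 * x) \<le> (SUP x\<in>{sl..su}. SUP y\<in>{sl..su}. D \<phi> x y)" .
    qed
  qed
qed

lemma LT:
  assumes n: "0 < n"
  shows "\<bar>(SUP x\<in>{sl..su}. SUP y\<in>{sl..su}. Dn \<phi> n x y) - (SUP x\<in>{sl..su}. SUP y\<in>{sl..su}. D \<phi> x y)\<bar>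
    \<le> 2 * L * su * KN / n"
proof (rule SUP_close[OF Ine, where B=B])
  fix x assume x: "x \<in> {sl..su}"
  show "\<bar>SUP y\<in>{sl..su}. Dn \<phi> n x y\<bar> \<le> B" using SUPD_bound n by simp
  show "\<bar>SUP y\<in>{sl..su}. D \<phi> x y\<bar> \<le> B" by (rule SUP_bound[OF Ine Db])
  show "\<bar>(SUP y\<in>{sl..su}. Dn \<phi> n x y) - (SUP y\<in>{sl..su}. D \<phi> x y)\<bar> \<le> 2 * L * su * KN / n"
  proof (rule SUP_close[OF Ine, where B=B])
    fix y assume y: "y \<in> {sl..su}"
    show "\<bar>Dn \<phi> n x y\<bar> \<le> B" using Dnb n by simp
    show "\<bar>D \<phi> x y\<bar> \<le> B" by (rule Db)
    have ax: "\<bar>x\<bar> \<le> su" and ay: "\<bar>y\<bar> \<le> su" using x y sig by auto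
    show "\<bar>Dn \<phi> n x y - D \<phi> x y\<bar> \<le> 2 * L * su * KN / n" by (rule Dn_D[OF phiB phiL L0 n ax ay])
  qed
qed

lemma RT:
  assumes n: "0 < n"
  shows "\<bar>(SUP x\<in>{sl..su}. Gn \<phi> n (sqrt 2 * x)) - (SUP x\<in>{sl..su}. G \<phi> (sqrt 2 * x))\<bar>
    \<le> L * (sqrt 2 * su) * KN / n"
proof (rule SUP_close[OF Ine, where B=B])
  fix x assume x: "x \<in> {sl..su}"
  show "\<bar>Gn \<phi> n (sqrt 2 * x)\<bar> \<le> B" by (rule Gnb)
  show "\<bar>G \<phi> (sqrt 2 * x)\<bar> \<le> B" by (rule Gb)
  have ax: "\<bar>sqrt 2 * x\<bar> \<le> sqrt 2 * su" using x sig by (auto simp: abs_mult)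
  show "\<bar>Gn \<phi> n (sqrt 2 * x) - G \<phi> (sqrt 2 * x)\<bar> \<le> L * (sqrt 2 * su) * KN / n"
    by (rule Gn_G[OF phiB phiL L0 n ax])
qed

lemma main_eq:
  "sup_exp P (\<lambda>w. \<phi> (V w * e w + Vb w * eb w)) = sup_exp P (\<lambda>w. \<phi> (sqrt 2 * (V w * e w)))"
proof -
  obtain K1 where K1: "\<And>n. 0 < n \<Longrightarrow> \<bar>sup_exp P (\<lambda>w. \<phi> (V w * e w + Vb w * eb w)) -
     sup_exp P (\<lambda>w. \<phi> (c (V w) * tr n (e w) + c (Vb w) * tr n (eb w)))\<bar> \<le> K1 / n"
    using LHS_err by blast
  obtain K2 where K2: "\<And>n. 0 < n \<Longrightarrow> \<bar>sup_exp P (\<lambda>w. \<phi> (sqrt 2 * (V w * e w))) -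
     sup_exp P (\<lambda>w. \<phi> (sqrt 2 * c (V w) * tr n (e w)))\<bar> \<le> K2 / n"
    using RHS_err by blast
  define K where "K = K1 + 2 * L * su * KN + L * (sqrt 2 * su) * KN + K2"
  have "sup_exp P (\<lambda>w. \<phi> (V w * e w + Vb w * eb w)) - sup_exp P (\<lambda>w. \<phi> (sqrt 2 * (V w * e w))) = 0"
  proof (rule vanish)
    fix n :: real assume n: "0 < n"
    note e1 = K1[OF n] and e2 = K2[OF n] and e3 = LT[OF n] and e4 = RT[OF n]
      and l = LHS_n[OF n] and r = RHS_n[OF n] and t = T_eq
    have Kn: "K / n = K1 / n + 2 * L * su * KN / n + L * (sqrt 2 * su) * KN / n + K2 / n"
      unfolding K_def by (simp add: add_divide_distrib)
    show "\<bar>sup_exp P (\<lambda>w. \<phi> (V w * e w + Vb w * eb w)) - sup_exp P (\<lambda>w. \<phi> (sqrt 2 * (V w * e w)))\<bar> \<le> K / n"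
      unfolding Kn using e1 e2 e3 e4 l r t by linarith
  qed
  then show ?thesis by simp
qed

end


theorem mainTheorem10:
  fixes M :: "'w measure" and P :: "'w measure set"
    and V Vb e eb W Wb :: "'w \<Rightarrow> real" and sl su :: real
  assumes space: "sublin_space M P"
    and meas: "V \<in> borel_measurable M" "Vb \<in> borel_measurable M"
              "e \<in> borel_measurable M" "eb \<in> borel_measurable M"
    and sig: "0 \<le> sl" "sl \<le> su"
    and W_def: "\<And>w. W w = V w * e w"
    and V_max: "maximal_distr P V sl su"
    and e_norm: "std_normal_distr P e"
    and V_e: "seq_indep P V e"
    and Wb_def: "\<And>w. Wb w = Vb w * eb w"
    and Vb_max: "maximal_distr P Vb sl su"
    and eb_norm: "std_normal_distr P eb"
    and Vb_eb: "seq_indep P Vb eb"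
    and Wb_W: "same_distr P Wb W"
    and chain1: "seq_indep P V Vb"
    and chain2: "seq_indep P (\<lambda>w. (V w, Vb w)) e"
    and chain3: "seq_indep P (\<lambda>w. (V w, Vb w, e w)) eb"
  shows "same_distr P (\<lambda>w. W w + Wb w) (\<lambda>w. sqrt 2 * W w)"
  unfolding same_distr_def
proof (intro allI impI)
  fix \<phi> :: "real \<Rightarrow> real"
  assume bl: "C_bLip \<phi>"
  obtain B L where B: "\<And>x. \<bar>\<phi> x\<bar> \<le> B" and L: "\<And>x y. \<bar>\<phi> x - \<phi> y\<bar> \<le> L * dist x y" and L0: "0 \<le> L"
    using C_bLipE[OF bl] by blast
  have L': "\<And>x y. \<bar>\<phi> x - \<phi> y\<bar> \<le> L * \<bar>x - y\<bar>" using L by (simp add: dist_real_def)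
  interpret T: thm10 M P V Vb e eb sl su \<phi> B L
    by (rule thm10.intro[OF space meas sig V_max e_norm V_e Vb_max eb_norm chain1 chain2 chain3 B L' L0])
  show "sup_exp P (\<lambda>w. \<phi> (W w + Wb w)) = sup_exp P (\<lambda>w. \<phi> (sqrt 2 * W w))"
    using T.main_eq by (simp add: W_def Wb_def)
qed

end
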